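(* Let $\alpha_1=\alpha_2\neq0$. Then for any $s,b,\beta_1,\beta_2\in\mathbb{R}$ there is no constant $C=C(\alpha_1,\alpha_2,s,b,\beta_1,\beta_2)$ such that \[ \|\partial_xw\|_{X^{\alpha_2,\beta_2}_{s,b-1}}\le C\|w\|_{X^{\alpha_1,\beta_1}_{s,b}}\quad\text{for all } w\in X^{\alpha_1,\beta_1}_{s,b}. \]
   Context: For $\alpha\ne0$, $\beta\in\mathbb{R}$ let $\phi^{\alpha,\beta}(\xi)=\alpha\xi^3-\beta\xi$ and $\langle x\rangle=1+|x|$. For $s,b\in\mathbb{R}$ the Fourier restriction space $X^{\alpha,\beta}_{s,b}$ is the completion of the Schwartz space $\mathscr{S}(\mathbb{R}^2)$ under the norm $\|w\|_{X^{\alpha,\beta}_{s,b}}=\|\langle\xi\rangle^s\langle\tau-\phi^{\alpha,\beta}(\xi)\rangle^b\widehat w(\xi,\tau)\|_{L^2(d\xi\,d\tau)}$, where $\widehat w$ is the space-time Fourier transform. *)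

theory Defs
  imports "HOL-Analysis.Analysis"
begin

text \<open>Functions on space-time \<open>\<real>\<^sup>2\<close> are written \<open>w :: real \<times> real \<Rightarrow> complex\<close>,
  with \<open>w (x, t)\<close>; the Fourier variables are \<open>(\<xi>, \<tau>)\<close>.\<close>

definition japanese :: "real \<Rightarrow> real" where
  "japanese x = 1 + \<bar>x\<bar>"

definition phi :: "real \<Rightarrow> real \<Rightarrow> real \<Rightarrow> real" where
  "phi \<alpha> \<beta> \<xi> = \<alpha> * \<xi> ^ 3 - \<beta> * \<xi>"

definition dx :: "(real \<times> real \<Rightarrow> complex) \<Rightarrow> real \<times> real \<Rightarrow> complex" where
  "dx f = (\<lambda>(x, t). vector_derivative (\<lambda>y::real. f (y, t)) (at x))"

definition dt :: "(real \<times> real \<Rightarrow> complex) \<Rightarrow> real \<times> real \<Rightarrow> complex" where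
  "dt f = (\<lambda>(x, t). vector_derivative (\<lambda>s::real. f (x, s)) (at t))"

fun pderiv_word :: "bool list \<Rightarrow> (real \<times> real \<Rightarrow> complex) \<Rightarrow> real \<times> real \<Rightarrow> complex" where
  "pderiv_word [] f = f"
| "pderiv_word (d # ds) f = (if d then dx else dt) (pderiv_word ds f)"

definition schwartz :: "(real \<times> real \<Rightarrow> complex) set" where
  "schwartz = {f. \<forall>ds. continuous_on UNIV (pderiv_word ds f)
      \<and> (\<forall>x t. (\<lambda>y. pderiv_word ds f (y, t)) differentiable (at x)
               \<and> (\<lambda>s. pderiv_word ds f (x, s)) differentiable (at t))
      \<and> (\<forall>j k::nat. \<exists>M. \<forall>x t. \<bar>x\<bar> ^ j * \<bar>t\<bar> ^ k * cmod (pderiv_word ds f (x, t)) \<le> M)}"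

definition fourier2 :: "(real \<times> real \<Rightarrow> complex) \<Rightarrow> real \<times> real \<Rightarrow> complex" where
  "fourier2 w = (\<lambda>(\<xi>, \<tau>). \<integral>z. w z * exp (- \<i> * complex_of_real (\<xi> * fst z + \<tau> * snd z)) \<partial>lborel)"

text \<open>The norm of the Fourier restriction space \<open>X^{\<alpha>,\<beta>}_{s,b}\<close> (on Schwartz functions,
  where the integral is finite).\<close>
definition Xnorm :: "real \<Rightarrow> real \<Rightarrow> real \<Rightarrow> real \<Rightarrow> (real \<times> real \<Rightarrow> complex) \<Rightarrow> real" where
  "Xnorm \<alpha> \<beta> s b w = sqrt (enn2real (\<integral>\<^sup>+ p.
      ennreal ((japanese (fst p) powr s * japanese (snd p - phi \<alpha> \<beta> (fst p)) powr b
                * cmod (fourier2 w p))\<^sup>2) \<partial>lborel))"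

end

theory Submission
  imports Defs "HOL-Probability.Probability" "HOL-Computational_Algebra.Polynomial"
begin

definition Ec :: "real \<Rightarrow> real \<Rightarrow> complex \<Rightarrow> complex" where
  "Ec p q z = exp (- (of_real p) * z^2 / 2 + \<i> * of_real q * z)"

definition FF :: "complex poly \<Rightarrow> real \<Rightarrow> real \<Rightarrow> real \<Rightarrow> complex" where
  "FF P p q x = poly P (of_real x) * Ec p q (of_real x)"

definition DD :: "real \<Rightarrow> real \<Rightarrow> complex poly \<Rightarrow> complex poly" where
  "DD p q P = pderiv P + P * [:\<i> * of_real q, - of_real p:]"

lemma Ec_deriv: "(Ec p q has_field_derivative (\<i> * of_real q - of_real p * z) * Ec p q z) (at z)"
  unfolding Ec_def
  by (auto intro!: derivative_eq_intros simp: algebra_simps power2_eq_square)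

lemma FFc_deriv: "((\<lambda>z. poly P z * Ec p q z) has_field_derivative poly (DD p q P) z * Ec p q z) (at z)"
  by (auto intro!: derivative_eq_intros Ec_deriv[THEN DERIV_chain2] simp: DD_def algebra_simps)

lemma FF_deriv: "(FF P p q has_vector_derivative FF (DD p q P) p q x) (at x within S)"
  unfolding FF_def[abs_def]
  by (rule has_vector_derivative_real_field) (rule FFc_deriv[of P p q "of_real x", simplified FF_def])

lemma cmod_Ec: "cmod (Ec p q (of_real x)) = exp (- p * x^2 / 2)"
  unfolding Ec_def norm_exp_eq_Re by simp

lemma continuous_FF: "continuous_on UNIV (FF P p q)"
  unfolding FF_def[abs_def] Ec_def by (intro continuous_intros) auto

lemma pow_le_exp: assumes "y \<ge> 0" "n > 0" shows "y ^ n \<le> real n ^ n * exp y"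
proof -
  have "(y / real n) ^ n \<le> (1 + y / real n) ^ n"
    using assms by (intro power_mono) auto
  also have "\<dots> \<le> exp y" using assms by (intro exp_ge_one_plus_x_over_n_power_n) auto
  finally have "(y / real n) ^ n \<le> exp y" .
  then show ?thesis using assms by (simp add: power_divide field_simps)
qed

lemma gauss_poly_bound:
  assumes p: "p > 0"
  shows "\<exists>M. \<forall>x::real. (1 + \<bar>x\<bar>) ^ N * exp (- p * x^2 / 2) \<le> M"
proof (intro exI allI)
  fix x :: real
  define n where "n = Suc N"
  define y where "y = p * (1 + x^2) / 2"
  have y0: "y \<ge> 0" using p by (simp add: y_def)
  have "(1 + \<bar>x\<bar>) ^ N \<le> (1 + \<bar>x\<bar>) ^ (2 * n)"
    by (intro power_increasing) (auto simp: n_def)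
  also have "\<dots> = ((1 + \<bar>x\<bar>)^2) ^ n" by (simp add: power_mult)
  also have "\<dots> \<le> (2 * (1 + x^2)) ^ n"
  proof (intro power_mono)
    have "0 \<le> (\<bar>x\<bar> - 1)^2" by simp
    then show "(1 + \<bar>x\<bar>)\<^sup>2 \<le> 2 * (1 + x\<^sup>2)" by (simp add: power2_eq_square algebra_simps)
  qed simp
  also have "2 * (1 + x^2) = (4 / p) * y" using p by (simp add: y_def)
  also have "((4 / p) * y) ^ n = (4 / p) ^ n * y ^ n" by (rule power_mult_distrib)
  also have "\<dots> \<le> (4 / p) ^ n * (real n ^ n * exp y)"
    using p y0 by (intro mult_left_mono pow_le_exp) (auto simp: n_def)
  finally have *: "(1 + \<bar>x\<bar>) ^ N \<le> (4 / p) ^ n * (real n ^ n * exp y)" .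
  have "(1 + \<bar>x\<bar>) ^ N * exp (- p * x^2 / 2) \<le> (4 / p) ^ n * (real n ^ n * exp y) * exp (- p * x^2 / 2)"
    by (intro mult_right_mono *) simp
  also have "\<dots> = (4 / p) ^ n * real n ^ n * exp (y + (- p * x^2 / 2))"
    unfolding exp_add by (simp only: mult.assoc)
  also have "y + (- p * x^2 / 2) = p / 2" by (simp add: y_def algebra_simps)
  finally show "(1 + \<bar>x\<bar>) ^ N * exp (- p * x^2 / 2) \<le> (4 / p) ^ Suc N * real (Suc N) ^ Suc N * exp (p / 2)"
    by (simp add: n_def)
qed

lemma poly_bound: "\<exists>C N. \<forall>x::real. cmod (poly P (of_real x)) \<le> C * (1 + \<bar>x\<bar>) ^ N"
proof (induction P rule: pCons_induct)
  case 0
  then show ?case by (intro exI[of _ 0]) auto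
next
  case (pCons a P)
  then obtain C N where CN: "\<And>x::real. cmod (poly P (of_real x)) \<le> C * (1 + \<bar>x\<bar>) ^ N" by blast
  have C0: "C \<ge> 0" using CN[of 0] using order_trans[OF norm_ge_zero CN[of 0]] by simp
  show ?case
  proof (intro exI allI)
    fix x :: real
    have "cmod (poly (pCons a P) (of_real x)) \<le> cmod a + \<bar>x\<bar> * cmod (poly P (of_real x))"
      by (simp add: norm_mult norm_triangle_ineq[THEN order_trans])
    also have "\<dots> \<le> cmod a + \<bar>x\<bar> * (C * (1 + \<bar>x\<bar>) ^ N)"
      by (intro add_left_mono mult_left_mono CN) auto
    also have "\<dots> \<le> cmod a * (1 + \<bar>x\<bar>) ^ Suc N + (1 + \<bar>x\<bar>) * (C * (1 + \<bar>x\<bar>) ^ N)"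
    proof (intro add_mono mult_right_mono)
      have "1 \<le> (1 + \<bar>x\<bar>) ^ Suc N" by (intro one_le_power) auto
      then show "cmod a \<le> cmod a * (1 + \<bar>x\<bar>) ^ Suc N"
        by (metis mult.right_neutral mult_left_mono norm_ge_zero)
    qed (use C0 in auto)
    also have "\<dots> = (cmod a + C) * (1 + \<bar>x\<bar>) ^ Suc N" by (simp add: algebra_simps)
    finally show "cmod (poly (pCons a P) (of_real x)) \<le> (cmod a + C) * (1 + \<bar>x\<bar>) ^ Suc N" .
  qed
qed

lemma FF_decay:
  assumes p: "p > 0"
  shows "\<exists>M. \<forall>x. \<bar>x\<bar> ^ j * cmod (FF P p q x) \<le> M"
proof -
  obtain C N where CN: "\<And>x::real. cmod (poly P (of_real x)) \<le> C * (1 + \<bar>x\<bar>) ^ N"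
    using poly_bound by blast
  have C0: "C \<ge> 0" using CN[of 0] using order_trans[OF norm_ge_zero CN[of 0]] by simp
  obtain M where M: "\<And>x. (1 + \<bar>x\<bar>) ^ (j + N) * exp (- p * x^2 / 2) \<le> M"
    using gauss_poly_bound[OF p] by blast
  show ?thesis
  proof (intro exI allI)
    fix x :: real
    have "\<bar>x\<bar> ^ j * cmod (FF P p q x) = \<bar>x\<bar> ^ j * cmod (poly P (of_real x)) * exp (- p * x^2 / 2)"
      by (simp add: FF_def norm_mult cmod_Ec)
    also have "\<dots> \<le> (1 + \<bar>x\<bar>) ^ j * (C * (1 + \<bar>x\<bar>) ^ N) * exp (- p * x^2 / 2)"
      by (intro mult_right_mono mult_mono CN power_mono) auto
    also have "\<dots> = C * ((1 + \<bar>x\<bar>) ^ (j + N) * exp (- p * x^2 / 2))"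
      by (simp add: power_add algebra_simps)
    also have "\<dots> \<le> C * M" using C0 M by (intro mult_left_mono) auto
    finally show "\<bar>x\<bar> ^ j * cmod (FF P p q x) \<le> C * M" .
  qed
qed

definition W :: "real \<Rightarrow> real \<Rightarrow> real \<Rightarrow> real \<Rightarrow> complex poly \<Rightarrow> complex poly \<Rightarrow> real \<times> real \<Rightarrow> complex" where
  "W p1 q1 p2 q2 P1 P2 = (\<lambda>z. FF P1 p1 q1 (fst z) * FF P2 p2 q2 (snd z))"

lemma dx_W: "dx (W p1 q1 p2 q2 P1 P2) = W p1 q1 p2 q2 (DD p1 q1 P1) P2"
proof (intro ext, clarify)
  fix x t :: real
  have "((\<lambda>y. FF P1 p1 q1 y * FF P2 p2 q2 t) has_vector_derivative FF (DD p1 q1 P1) p1 q1 x * FF P2 p2 q2 t) (at x)"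
    by (intro has_vector_derivative_mult_left FF_deriv)
  then show "dx (W p1 q1 p2 q2 P1 P2) (x, t) = W p1 q1 p2 q2 (DD p1 q1 P1) P2 (x, t)"
    unfolding dx_def W_def by (simp add: vector_derivative_at)
qed

lemma dt_W: "dt (W p1 q1 p2 q2 P1 P2) = W p1 q1 p2 q2 P1 (DD p2 q2 P2)"
proof (intro ext, clarify)
  fix x t :: real
  have "((\<lambda>y. FF P1 p1 q1 x * FF P2 p2 q2 y) has_vector_derivative FF P1 p1 q1 x * FF (DD p2 q2 P2) p2 q2 t) (at t)"
    by (intro has_vector_derivative_mult_right FF_deriv)
  then show "dt (W p1 q1 p2 q2 P1 P2) (x, t) = W p1 q1 p2 q2 P1 (DD p2 q2 P2) (x, t)"
    unfolding dt_def W_def by (simp add: vector_derivative_at)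
qed

lemma pderiv_word_W: "\<exists>Q1 Q2. pderiv_word ds (W p1 q1 p2 q2 P1 P2) = W p1 q1 p2 q2 Q1 Q2"
proof (induction ds)
  case Nil
  then show ?case by auto
next
  case (Cons d ds)
  then obtain Q1 Q2 where "pderiv_word ds (W p1 q1 p2 q2 P1 P2) = W p1 q1 p2 q2 Q1 Q2" by blast
  then show ?case by (cases d) (auto simp: dx_W dt_W)
qed

lemma W_schwartz:
  assumes "p1 > 0" "p2 > 0"
  shows "W p1 q1 p2 q2 P1 P2 \<in> schwartz"
  unfolding schwartz_def
proof (intro CollectI allI conjI)
  fix ds
  obtain Q1 Q2 where Q: "pderiv_word ds (W p1 q1 p2 q2 P1 P2) = W p1 q1 p2 q2 Q1 Q2"
    using pderiv_word_W by blast
  show "continuous_on UNIV (pderiv_word ds (W p1 q1 p2 q2 P1 P2))"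
    unfolding Q unfolding W_def
    by (intro continuous_on_mult continuous_on_compose2[OF continuous_FF] continuous_intros) auto
  fix x t
  show "(\<lambda>y. pderiv_word ds (W p1 q1 p2 q2 P1 P2) (y, t)) differentiable at x"
    unfolding Q unfolding W_def by (auto intro!: differentiableI_vector has_vector_derivative_mult_left FF_deriv)
  show "(\<lambda>s. pderiv_word ds (W p1 q1 p2 q2 P1 P2) (x, s)) differentiable at t"
    unfolding Q unfolding W_def by (auto intro!: differentiableI_vector has_vector_derivative_mult_right FF_deriv)
next
  fix ds and j k :: nat
  obtain Q1 Q2 where Q: "pderiv_word ds (W p1 q1 p2 q2 P1 P2) = W p1 q1 p2 q2 Q1 Q2"
    using pderiv_word_W by blast
  obtain M1 where M1: "\<And>x. \<bar>x\<bar> ^ j * cmod (FF Q1 p1 q1 x) \<le> M1" using FF_decay[OF assms(1)] by blast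
  obtain M2 where M2: "\<And>x. \<bar>x\<bar> ^ k * cmod (FF Q2 p2 q2 x) \<le> M2" using FF_decay[OF assms(2)] by blast
  show "\<exists>M. \<forall>x t. \<bar>x\<bar> ^ j * \<bar>t\<bar> ^ k * cmod (pderiv_word ds (W p1 q1 p2 q2 P1 P2) (x, t)) \<le> M"
  proof (intro exI allI)
    fix x t
    have "\<bar>x\<bar> ^ j * \<bar>t\<bar> ^ k * cmod (pderiv_word ds (W p1 q1 p2 q2 P1 P2) (x, t))
        = (\<bar>x\<bar> ^ j * cmod (FF Q1 p1 q1 x)) * (\<bar>t\<bar> ^ k * cmod (FF Q2 p2 q2 t))"
      unfolding Q by (simp add: W_def norm_mult)
    also have "\<dots> \<le> M1 * M2"
      by (intro mult_mono M1 M2) (auto intro: order_trans[OF _ M1[of 0]])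
    finally show "\<bar>x\<bar> ^ j * \<bar>t\<bar> ^ k * cmod (pderiv_word ds (W p1 q1 p2 q2 P1 P2) (x, t)) \<le> M1 * M2" .
  qed
qed

lemma FF_measurable[measurable]: "FF P p q \<in> borel_measurable borel"
  by (rule borel_measurable_continuous_onI[OF continuous_FF])

lemma exp_sq_integrable:
  assumes "c > 0" shows "integrable lborel (\<lambda>x::real. exp (- c * x^2))"
proof -
  define \<sigma> where "\<sigma> = sqrt (1 / (2 * c))"
  have s: "\<sigma> > 0" "2 * \<sigma>^2 = 1 / c" using assms by (auto simp: \<sigma>_def)
  have "integrable lborel (\<lambda>x. sqrt (2 * pi * \<sigma>^2) * normal_density 0 \<sigma> x)"
    by (intro integrable_mult_right integrable_normal_density s(1))
  also have "(\<lambda>x. sqrt (2 * pi * \<sigma>^2) * normal_density 0 \<sigma> x) = (\<lambda>x. exp (- c * x^2))"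
  proof
    fix x :: real
    have "sqrt (2 * pi * \<sigma>^2) > 0" using s by simp
    then have "sqrt (2 * pi * \<sigma>^2) * normal_density 0 \<sigma> x = exp (- (x^2) / (2 * \<sigma>^2))"
      using s by (simp add: normal_density_def)
    also have "- (x^2) / (2 * \<sigma>^2) = - c * x^2" by (subst s(2)) simp
    finally show "sqrt (2 * pi * \<sigma>^2) * normal_density 0 \<sigma> x = exp (- c * x^2)" .
  qed
  finally show ?thesis .
qed

lemma FF_bound:
  assumes p: "p > 0"
  shows "\<exists>M. \<forall>x. cmod (FF P p q x) \<le> M * exp (- (p/4) * x^2)"
proof -
  obtain C N where CN: "\<And>x::real. cmod (poly P (of_real x)) \<le> C * (1 + \<bar>x\<bar>) ^ N"
    using poly_bound by blast
  have C0: "C \<ge> 0" using order_trans[OF norm_ge_zero CN[of 0]] by simp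
  obtain M where M: "\<And>x. (1 + \<bar>x\<bar>) ^ N * exp (- (p/2) * x^2 / 2) \<le> M"
    using gauss_poly_bound[of "p/2" N] p by auto
  show ?thesis
  proof (intro exI allI)
    fix x :: real
    have e: "exp (- p * x^2 / 2) = exp (- (p/2) * x^2 / 2) * exp (- (p/4) * x^2)"
      by (simp add: exp_add[symmetric] field_simps)
    have "cmod (FF P p q x) = cmod (poly P (of_real x)) * exp (- p * x^2 / 2)"
      by (simp add: FF_def norm_mult cmod_Ec)
    also have "\<dots> \<le> C * (1 + \<bar>x\<bar>) ^ N * exp (- p * x^2 / 2)"
      by (intro mult_right_mono CN) auto
    also have "\<dots> = C * ((1 + \<bar>x\<bar>) ^ N * exp (- (p/2) * x^2 / 2)) * exp (- (p/4) * x^2)"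
      unfolding e by (simp only: mult.assoc)
    also have "\<dots> \<le> C * M * exp (- (p/4) * x^2)"
      using C0 M by (intro mult_right_mono mult_left_mono) auto
    finally show "cmod (FF P p q x) \<le> C * M * exp (- (p/4) * x^2)" .
  qed
qed

lemma FF_integrable:
  assumes p: "p > 0"
  shows "integrable lborel (FF P p q)"
proof -
  obtain M where M: "\<And>x. cmod (FF P p q x) \<le> M * exp (- (p/4) * x^2)" using FF_bound[OF p] by blast
  show ?thesis
  proof (rule Bochner_Integration.integrable_bound)
    show "integrable lborel (\<lambda>x. M * exp (- (p/4) * x^2))"
      using p by (intro integrable_mult_right exp_sq_integrable) auto
    show "AE x in lborel. norm (FF P p q x) \<le> norm (M * exp (- (p/4) * x^2))"
      using M by (auto intro: order_trans[OF _ abs_ge_self])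
  qed simp
qed

lemma char_std: "(\<integral>x. complex_of_real (exp (- (x^2) / 2)) * exp (\<i> * complex_of_real (\<theta> * x)) \<partial>lborel)
    = complex_of_real (sqrt (2 * pi) * exp (- (\<theta>^2) / 2))"
proof -
  have "char std_normal_distribution \<theta> = complex_of_real (exp (- (\<theta>^2) / 2))"
    by (simp add: char_std_normal_distribution)
  moreover have "char std_normal_distribution \<theta> = (\<integral>x. std_normal_density x *\<^sub>R exp (\<i> * complex_of_real (\<theta> * x)) \<partial>lborel)"
    unfolding char_def by (subst integral_density) auto
  ultimately have A: "(\<integral>x. std_normal_density x *\<^sub>R exp (\<i> * complex_of_real (\<theta> * x)) \<partial>lborel) = complex_of_real (exp (- (\<theta>^2) / 2))"
    by simp
  have B: "(\<lambda>x. complex_of_real (exp (- (x^2) / 2)) * exp (\<i> * complex_of_real (\<theta> * x)))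
      = (\<lambda>x. complex_of_real (sqrt (2 * pi)) * (std_normal_density x *\<^sub>R exp (\<i> * complex_of_real (\<theta> * x))))"
    by (auto simp: std_normal_density_def scaleR_conv_of_real)
  show ?thesis
    unfolding B integral_mult_right_zero A by simp
qed

lemma Ec_real: "Ec p q (of_real x) = complex_of_real (exp (- p * x^2 / 2)) * exp (\<i> * complex_of_real (q * x))"
proof -
  have "Ec p q (of_real x) = exp (complex_of_real (- p * x^2 / 2) + \<i> * complex_of_real (q * x))"
    unfolding Ec_def by (simp add: algebra_simps)
  then show ?thesis by (simp only: exp_add exp_of_real)
qed

lemma gauss_FT:
  assumes p: "p > 0"
  shows "(\<integral>x. Ec p r (of_real x) \<partial>lborel) = complex_of_real (sqrt (2 * pi / p) * exp (- (r^2) / (2 * p)))"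
proof -
  define c where "c = 1 / sqrt p"
  have c: "c \<noteq> 0" "c > 0" using p by (auto simp: c_def)
  have "(\<integral>x. Ec p r (of_real x) \<partial>lborel) = \<bar>c\<bar> *\<^sub>R (\<integral>x. Ec p r (of_real (0 + c * x)) \<partial>lborel)"
    by (rule lborel_integral_real_affine[OF c(1)])
  also have "(\<lambda>x. Ec p r (of_real (0 + c * x))) = (\<lambda>x. complex_of_real (exp (- (x^2) / 2)) * exp (\<i> * complex_of_real ((r * c) * x)))"
  proof
    fix x :: real
    have "p * (c * x)^2 = x^2" using p by (simp add: c_def power_mult_distrib power_divide)
    then show "Ec p r (of_real (0 + c * x)) = complex_of_real (exp (- (x^2) / 2)) * exp (\<i> * complex_of_real ((r * c) * x))"
      unfolding Ec_real by (simp add: mult.assoc)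
  qed
  also have "(\<integral>x. complex_of_real (exp (- (x^2) / 2)) * exp (\<i> * complex_of_real ((r * c) * x)) \<partial>lborel)
     = complex_of_real (sqrt (2 * pi) * exp (- ((r * c)^2) / 2))" by (rule char_std)
  finally show ?thesis
    using p by (simp add: c_def scaleR_conv_of_real power_mult_distrib real_sqrt_divide field_simps)
qed

lemma prod_integral:
  fixes f g :: "real \<Rightarrow> complex"
  assumes f: "integrable lborel f" and g: "integrable lborel g"
  shows "(\<integral>z. f (fst z) * g (snd z) \<partial>(lborel::(real \<times> real) measure)) = integral\<^sup>L lborel f * integral\<^sup>L lborel g"
proof -
  have [measurable]: "f \<in> borel_measurable borel" "g \<in> borel_measurable borel"
    using borel_measurable_integrable[OF f] borel_measurable_integrable[OF g] by auto
  have int: "integrable (lborel \<Otimes>\<^sub>M lborel) (\<lambda>(x, y). f x * g y)"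
  proof (rule lborel_pair.Fubini_integrable)
    show "(\<lambda>(x, y). f x * g y) \<in> borel_measurable (lborel \<Otimes>\<^sub>M lborel)" by measurable
    have "integrable lborel (\<lambda>x. norm (f x) * (\<integral>y. norm (g y) \<partial>lborel))"
      using f by (intro integrable_mult_left integrable_norm)
    then show "integrable lborel (\<lambda>x. \<integral>y. norm (case (x, y) of (x, y) \<Rightarrow> f x * g y) \<partial>lborel)"
      by (simp add: norm_mult)
    show "AE x in lborel. integrable lborel (\<lambda>y. case (x, y) of (x, y) \<Rightarrow> f x * g y)"
      using g by (auto intro!: integrable_mult_right)
  qed
  have "(\<integral>z. f (fst z) * g (snd z) \<partial>(lborel::(real \<times> real) measure))
      = (\<integral>z. (\<lambda>(x, y). f x * g y) z \<partial>(lborel \<Otimes>\<^sub>M lborel))"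
    by (simp add: lborel_prod split_beta')
  also have "\<dots> = (\<integral>x. (\<integral>y. f x * g y \<partial>lborel) \<partial>lborel)"
    using lborel_pair.integral_fst[OF int] by simp
  also have "\<dots> = (\<integral>x. f x * integral\<^sup>L lborel g \<partial>lborel)" by simp
  also have "\<dots> = integral\<^sup>L lborel f * integral\<^sup>L lborel g" by simp
  finally show ?thesis .
qed

lemma FF_mod: "FF P p q x * exp (- \<i> * complex_of_real (\<xi> * x)) = FF P p (q - \<xi>) x"
proof -
  have "Ec p q (of_real x) * exp (- \<i> * complex_of_real (\<xi> * x)) = Ec p (q - \<xi>) (of_real x)"
    unfolding Ec_def exp_add[symmetric] by (simp add: algebra_simps)
  then show ?thesis unfolding FF_def by (simp add: mult.assoc)
qed

lemma fourier2_W: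
  assumes "p1 > 0" "p2 > 0"
  shows "fourier2 (W p1 q1 p2 q2 P1 P2) (\<xi>, \<tau>) =
     integral\<^sup>L lborel (FF P1 p1 (q1 - \<xi>)) * integral\<^sup>L lborel (FF P2 p2 (q2 - \<tau>))"
proof -
  have "(\<lambda>z. W p1 q1 p2 q2 P1 P2 z * exp (- \<i> * complex_of_real (\<xi> * fst z + \<tau> * snd z)))
      = (\<lambda>z. FF P1 p1 (q1 - \<xi>) (fst z) * FF P2 p2 (q2 - \<tau>) (snd z))"
  proof
    fix z :: "real \<times> real"
    have "exp (- \<i> * complex_of_real (\<xi> * fst z + \<tau> * snd z))
        = exp (- \<i> * complex_of_real (\<xi> * fst z)) * exp (- \<i> * complex_of_real (\<tau> * snd z))"
      unfolding exp_add[symmetric] by (simp add: algebra_simps)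
    then show "W p1 q1 p2 q2 P1 P2 z * exp (- \<i> * complex_of_real (\<xi> * fst z + \<tau> * snd z))
      = FF P1 p1 (q1 - \<xi>) (fst z) * FF P2 p2 (q2 - \<tau>) (snd z)"
      unfolding W_def FF_mod[symmetric] by (simp add: ac_simps)
  qed
  then show ?thesis
    unfolding fourier2_def using assms by (simp add: prod_integral FF_integrable)
qed

lemma FF_tendsto:
  assumes p: "p > 0"
  shows "(FF P p q \<longlongrightarrow> 0) at_top" "(FF P p q \<longlongrightarrow> 0) at_bot"
proof -
  obtain M where M: "\<And>x. \<bar>x\<bar> ^ 1 * cmod (FF P p q x) \<le> M" using FF_decay[OF p] by blast
  have b: "cmod (FF P p q x) \<le> M / \<bar>x\<bar>" if "x \<noteq> 0" for x
    using M[of x] that by (simp add: field_simps)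
  have l1: "((\<lambda>x. M / \<bar>x\<bar>) \<longlongrightarrow> 0) at_top" by real_asymp
  have "eventually (\<lambda>x. norm (FF P p q x) \<le> M / \<bar>x\<bar>) at_top"
    using eventually_gt_at_top[of 0] by eventually_elim (rule b, simp)
  from Lim_null_comparison[OF this l1] show "(FF P p q \<longlongrightarrow> 0) at_top" .
  have l2: "((\<lambda>x. M / \<bar>x\<bar>) \<longlongrightarrow> 0) at_bot" by real_asymp
  have "eventually (\<lambda>x. norm (FF P p q x) \<le> M / \<bar>x\<bar>) at_bot"
    using eventually_at_bot_not_equal[of 0] by eventually_elim (rule b)
  from Lim_null_comparison[OF this l2] show "(FF P p q \<longlongrightarrow> 0) at_bot" .
qed

lemma FTC_zero:
  assumes p: "p > 0"
  shows "integral\<^sup>L lborel (FF (DD p r P) p r) = 0"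
proof -
  have "(LBINT x=-\<infinity>..\<infinity>. FF (DD p r P) p r x) = 0 - 0"
  proof (rule interval_integral_FTC_integrable)
    show "- \<infinity> < (\<infinity>::ereal)" by simp
    show "(FF P p r has_vector_derivative FF (DD p r P) p r x) (at x)" for x by (rule FF_deriv)
    show "isCont (FF (DD p r P) p r) x" for x
      using continuous_FF by (simp add: continuous_on_eq_continuous_at)
    show "set_integrable lborel (einterval (- \<infinity>) \<infinity>) (FF (DD p r P) p r)"
      using FF_integrable[OF p] by (simp add: set_integrable_def)
    show "((FF P p r \<circ> real_of_ereal) \<longlongrightarrow> 0) (at_right (- \<infinity>))"
      unfolding ereal_tendsto_simps1 by (rule FF_tendsto[OF p])
    show "((FF P p r \<circ> real_of_ereal) \<longlongrightarrow> 0) (at_left \<infinity>)"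
      unfolding ereal_tendsto_simps1 by (rule FF_tendsto[OF p])
  qed
  then show ?thesis
    by (simp add: interval_lebesgue_integral_def set_lebesgue_integral_def)
qed

lemma FF_one: "FF 1 p r x = Ec p r (of_real x)"
  by (simp add: FF_def)

lemma FT_one:
  assumes "p > 0"
  shows "integral\<^sup>L lborel (FF 1 p r) = complex_of_real (sqrt (2 * pi / p) * exp (- (r^2) / (2 * p)))"
  unfolding FF_one using gauss_FT[OF assms] by simp

lemma FT_dx:
  assumes p: "p > 0"
  shows "integral\<^sup>L lborel (FF (DD p a 1) p (a - \<xi>)) = \<i> * complex_of_real \<xi> * integral\<^sup>L lborel (FF 1 p (a - \<xi>))"
proof -
  have "FF (DD p a 1) p (a - \<xi>) = (\<lambda>x. FF (DD p (a - \<xi>) 1) p (a - \<xi>) x + \<i> * complex_of_real \<xi> * FF 1 p (a - \<xi>) x)"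
    by (auto simp: FF_def DD_def algebra_simps)
  then have "integral\<^sup>L lborel (FF (DD p a 1) p (a - \<xi>)) =
      integral\<^sup>L lborel (FF (DD p (a - \<xi>) 1) p (a - \<xi>)) + integral\<^sup>L lborel (\<lambda>x. \<i> * complex_of_real \<xi> * FF 1 p (a - \<xi>) x)"
    using FF_integrable[OF p] by (simp add: Bochner_Integration.integral_add)
  also have "\<dots> = \<i> * complex_of_real \<xi> * integral\<^sup>L lborel (FF 1 p (a - \<xi>))"
    using FTC_zero[OF p] by simp
  finally show ?thesis .
qed

definition wA :: "real \<Rightarrow> real \<Rightarrow> real \<times> real \<Rightarrow> complex" where
  "wA a c = W (1 / a^4) a 1 c 1 1"

definition gA :: "real \<Rightarrow> real" where
  "gA a = sqrt (2 * pi * a^4) * sqrt (2 * pi)"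

lemma wA_schwartz: "a > 0 \<Longrightarrow> wA a c \<in> schwartz"
  unfolding wA_def by (rule W_schwartz) auto

lemma exp_arg1: "(a::real) > 0 \<Longrightarrow> - ((a - \<xi>)^2) / (2 * (1 / a^4)) = - ((a^2 * (\<xi> - a))^2) / 2"
  by (simp add: field_simps power2_eq_square) (simp add: power4_eq_xxxx algebra_simps)

lemma exp_arg2: "- ((c - (\<tau>::real))^2) / (2 * 1) = - ((\<tau> - c)^2) / 2"
  by (simp add: power2_commute)

lemma fourier_wA:
  assumes a: "a > 0"
  shows "cmod (fourier2 (wA a c) (\<xi>, \<tau>)) = gA a * (exp (- ((a^2 * (\<xi> - a))^2) / 2) * exp (- ((\<tau> - c)^2) / 2))"
proof -
  have "fourier2 (wA a c) (\<xi>, \<tau>) = integral\<^sup>L lborel (FF 1 (1 / a^4) (a - \<xi>)) * integral\<^sup>L lborel (FF 1 1 (c - \<tau>))"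
    unfolding wA_def using a by (intro fourier2_W) auto
  also have "\<dots> = complex_of_real (sqrt (2 * pi / (1 / a^4)) * exp (- ((a - \<xi>)^2) / (2 * (1 / a^4)))) *
      complex_of_real (sqrt (2 * pi / 1) * exp (- ((c - \<tau>)^2) / (2 * 1)))"
    using FT_one[of "1 / a^4" "a - \<xi>"] FT_one[of 1 "c - \<tau>"] a by simp
  finally show ?thesis
    unfolding exp_arg1[OF a] exp_arg2 gA_def using a
    by (simp add: norm_mult abs_mult)
qed

lemma dx_wA: "dx (wA a c) = W (1 / a^4) a 1 c (DD (1 / a^4) a 1) 1"
  unfolding wA_def by (rule dx_W)

lemma fourier_dx_wA:
  assumes a: "a > 0"
  shows "cmod (fourier2 (dx (wA a c)) (\<xi>, \<tau>)) = \<bar>\<xi>\<bar> * (gA a * (exp (- ((a^2 * (\<xi> - a))^2) / 2) * exp (- ((\<tau> - c)^2) / 2)))"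
proof -
  have "fourier2 (dx (wA a c)) (\<xi>, \<tau>) = integral\<^sup>L lborel (FF (DD (1 / a^4) a 1) (1 / a^4) (a - \<xi>)) * integral\<^sup>L lborel (FF 1 1 (c - \<tau>))"
    unfolding dx_wA using a by (intro fourier2_W) auto
  also have "\<dots> = \<i> * complex_of_real \<xi> * (integral\<^sup>L lborel (FF 1 (1 / a^4) (a - \<xi>)) * integral\<^sup>L lborel (FF 1 1 (c - \<tau>)))"
    using a by (simp add: FT_dx)
  also have "integral\<^sup>L lborel (FF 1 (1 / a^4) (a - \<xi>)) * integral\<^sup>L lborel (FF 1 1 (c - \<tau>)) = fourier2 (wA a c) (\<xi>, \<tau>)"
    unfolding wA_def using a by (intro fourier2_W[symmetric]) auto
  finally show ?thesis using fourier_wA[OF a] by (simp add: norm_mult)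
qed

lemma nn_prod:
  fixes f g :: "real \<Rightarrow> real"
  assumes [measurable]: "f \<in> borel_measurable borel" "g \<in> borel_measurable borel"
  assumes "\<And>x. f x \<ge> 0" "\<And>x. g x \<ge> 0"
  shows "(\<integral>\<^sup>+z. ennreal (f (fst z) * g (snd z)) \<partial>(lborel::(real \<times> real) measure))
       = (\<integral>\<^sup>+x. ennreal (f x) \<partial>lborel) * (\<integral>\<^sup>+y. ennreal (g y) \<partial>lborel)"
proof -
  have "(\<integral>\<^sup>+z. ennreal (f (fst z) * g (snd z)) \<partial>(lborel::(real \<times> real) measure))
      = (\<integral>\<^sup>+z. ennreal (f (fst z) * g (snd z)) \<partial>(lborel \<Otimes>\<^sub>M lborel))"
    by (simp add: lborel_prod)
  also have "\<dots> = (\<integral>\<^sup>+x. \<integral>\<^sup>+y. ennreal (f x * g y) \<partial>lborel \<partial>lborel)"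
    by (subst lborel.nn_integral_fst[symmetric]) auto
  also have "\<dots> = (\<integral>\<^sup>+x. ennreal (f x) * (\<integral>\<^sup>+y. ennreal (g y) \<partial>lborel) \<partial>lborel)"
    using assms by (simp add: ennreal_mult nn_integral_cmult)
  also have "\<dots> = (\<integral>\<^sup>+x. ennreal (f x) \<partial>lborel) * (\<integral>\<^sup>+y. ennreal (g y) \<partial>lborel)"
    by (simp add: nn_integral_multc)
  finally show ?thesis .
qed

lemma gauss_nn:
  assumes s: "\<sigma> > 0"
  shows "(\<integral>\<^sup>+x. ennreal (exp (- (((x - \<mu>) / \<sigma>)^2) / 2)) \<partial>lborel) = ennreal (sqrt (2 * pi) * \<sigma>)"
proof -
  have "(\<integral>\<^sup>+x. ennreal (normal_density \<mu> \<sigma> x) \<partial>lborel) = 1"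
    using s by (subst nn_integral_eq_integral) (auto intro!: integrable_normal_density)
  moreover have "(\<lambda>x. ennreal (exp (- (((x - \<mu>) / \<sigma>)^2) / 2))) = (\<lambda>x. ennreal (sqrt (2 * pi) * \<sigma>) * ennreal (normal_density \<mu> \<sigma> x))"
  proof
    fix x
    have "sqrt (2 * pi * \<sigma>^2) = sqrt (2 * pi) * \<sigma>" using s by (simp add: real_sqrt_mult)
    then have "sqrt (2 * pi) * \<sigma> * normal_density \<mu> \<sigma> x = exp (- (((x - \<mu>) / \<sigma>)^2) / 2)"
      using s by (simp add: normal_density_def power_divide)
    then show "ennreal (exp (- (((x - \<mu>) / \<sigma>)^2) / 2)) = ennreal (sqrt (2 * pi) * \<sigma>) * ennreal (normal_density \<mu> \<sigma> x)"
      using s by (simp add: ennreal_mult[symmetric])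
  qed
  ultimately show ?thesis by (simp add: nn_integral_cmult)
qed

lemma J_ge1: "japanese x \<ge> 1" by (simp add: japanese_def)
lemma J_pos: "japanese x > 0" by (simp add: japanese_def)

lemma J_powr_gauss:
  assumes N: "N \<ge> 0"
  shows "\<exists>M>0. \<forall>x. japanese x powr N * exp (- (x^2) / 2) \<le> M"
proof -
  obtain M where M: "\<And>x::real. (1 + \<bar>x\<bar>) ^ nat \<lceil>N\<rceil> * exp (- (x^2) / 2) \<le> M"
    using gauss_poly_bound[of 1 "nat \<lceil>N\<rceil>"] by auto
  have "M \<ge> 1" using M[of 0] by simp
  show ?thesis
  proof (intro exI conjI allI)
    fix x
    have "japanese x powr N \<le> japanese x powr (real (nat \<lceil>N\<rceil>))"
      using J_ge1[of x] N by (intro powr_mono) auto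
    also have "\<dots> = (1 + \<bar>x\<bar>) ^ nat \<lceil>N\<rceil>" using J_pos[of x] by (simp add: powr_realpow japanese_def)
    finally have "japanese x powr N * exp (- (x^2) / 2) \<le> (1 + \<bar>x\<bar>) ^ nat \<lceil>N\<rceil> * exp (- (x^2) / 2)"
      by (intro mult_right_mono) auto
    then show "japanese x powr N * exp (- (x^2) / 2) \<le> M" using M[of x] by linarith
  qed (use \<open>M \<ge> 1\<close> in auto)
qed

lemma master_upper:
  assumes N: "N \<ge> 0"
  shows "\<exists>B>0. \<forall>a c D h. a \<ge> 1 \<longrightarrow> D \<ge> 0 \<longrightarrow>
     (\<forall>\<xi> \<tau>. h (\<xi>, \<tau>) \<le> D * (japanese (a^2 * (\<xi> - a)) powr N * japanese (\<tau> - c) powr N *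
         exp (- ((a^2 * (\<xi> - a))^2)) * exp (- ((\<tau> - c)^2)))) \<longrightarrow>
     (\<integral>\<^sup>+z. ennreal (h z) \<partial>lborel) \<le> ennreal (D * B / a^2)"
proof -
  obtain M where M0: "M > 0" and M: "\<And>x. japanese x powr N * exp (- (x^2) / 2) \<le> M"
    using J_powr_gauss[OF N] by blast
  show ?thesis
  proof (intro exI[of _ "2 * pi * M^2"] conjI allI impI)
    show "2 * pi * M^2 > 0" using M0 by simp
    fix a c D :: real and h :: "real \<times> real \<Rightarrow> real"
    assume a: "a \<ge> 1" and D: "D \<ge> 0" and hb: "\<forall>\<xi> \<tau>. h (\<xi>, \<tau>) \<le> D * (japanese (a^2 * (\<xi> - a)) powr N * japanese (\<tau> - c) powr N *
         exp (- ((a^2 * (\<xi> - a))^2)) * exp (- ((\<tau> - c)^2)))"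
    define g1 where "g1 = (\<lambda>\<xi>::real. exp (- (((\<xi> - a) / (1 / a^2))^2) / 2))"
    define g2 where "g2 = (\<lambda>\<tau>::real. exp (- (((\<tau> - c) / 1)^2) / 2))"
    have pt: "h z \<le> (D * M^2) * (g1 (fst z) * g2 (snd z))" for z
    proof -
      obtain \<xi> \<tau> where z: "z = (\<xi>, \<tau>)" by (cases z)
      define u where "u = a^2 * (\<xi> - a)"
      define v where "v = \<tau> - c"
      have g1u: "g1 \<xi> = exp (- (u^2) / 2)" using a by (simp add: g1_def u_def field_simps)
      have g2v: "g2 \<tau> = exp (- (v^2) / 2)" by (simp add: g2_def v_def)
      have eu: "exp (- (u^2)) = exp (- (u^2) / 2) * exp (- (u^2) / 2)" by (simp add: exp_add[symmetric])
      have ev: "exp (- (v^2)) = exp (- (v^2) / 2) * exp (- (v^2) / 2)" by (simp add: exp_add[symmetric])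
      have "h z \<le> D * (japanese u powr N * japanese v powr N * exp (- (u^2)) * exp (- (v^2)))"
        using hb z by (simp add: u_def v_def)
      also have "\<dots> = D * ((japanese u powr N * exp (- (u^2) / 2)) * (japanese v powr N * exp (- (v^2) / 2)) * (exp (- (u^2) / 2) * exp (- (v^2) / 2)))"
        unfolding eu ev by (simp only: mult_ac)
      also have "\<dots> \<le> D * (M * M * (exp (- (u^2) / 2) * exp (- (v^2) / 2)))"
        using D M M0 by (intro mult_left_mono mult_right_mono mult_mono) auto
      finally show ?thesis unfolding z g1u[symmetric] g2v[symmetric] by (simp add: power2_eq_square ac_simps)
    qed
    have "(\<integral>\<^sup>+z. ennreal (h z) \<partial>lborel) \<le> (\<integral>\<^sup>+z. ennreal (D * M^2) * ennreal (g1 (fst z) * g2 (snd z)) \<partial>lborel)"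
    proof (intro nn_integral_mono)
      fix z :: "real \<times> real"
      have "ennreal (D * M^2) * ennreal (g1 (fst z) * g2 (snd z)) = ennreal (D * M^2 * (g1 (fst z) * g2 (snd z)))"
        using D by (intro ennreal_mult[symmetric]) (auto simp: g1_def g2_def)
      then show "ennreal (h z) \<le> ennreal (D * M^2) * ennreal (g1 (fst z) * g2 (snd z))"
        using pt[of z] by (simp add: ennreal_leI)
    qed
    also have "\<dots> = ennreal (D * M^2) * ((\<integral>\<^sup>+x. ennreal (g1 x) \<partial>lborel) * (\<integral>\<^sup>+y. ennreal (g2 y) \<partial>lborel))"
    proof -
      have g1m[measurable]: "g1 \<in> borel_measurable borel" unfolding g1_def by measurable
      have g2m[measurable]: "g2 \<in> borel_measurable borel" unfolding g2_def by measurable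
      have "(\<integral>\<^sup>+z. ennreal (D * M^2) * ennreal (g1 (fst z) * g2 (snd z)) \<partial>lborel)
          = ennreal (D * M^2) * (\<integral>\<^sup>+z. ennreal (g1 (fst z) * g2 (snd z)) \<partial>lborel)"
      proof (rule nn_integral_cmult)
        have "(\<lambda>z. g1 (fst z) * g2 (snd z)) \<in> borel_measurable borel"
          by (intro borel_measurable_continuous_onI) (auto simp: g1_def g2_def intro!: continuous_intros)
        then show "(\<lambda>z. ennreal (g1 (fst z) * g2 (snd z))) \<in> borel_measurable lborel" by simp
      qed
      also have "(\<integral>\<^sup>+z. ennreal (g1 (fst z) * g2 (snd z)) \<partial>lborel) = (\<integral>\<^sup>+x. ennreal (g1 x) \<partial>lborel) * (\<integral>\<^sup>+y. ennreal (g2 y) \<partial>lborel)"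
        by (rule nn_prod) (auto simp: g1_def g2_def)
      finally show ?thesis .
    qed
    also have "\<dots> = ennreal (D * M^2) * (ennreal (sqrt (2 * pi) * (1 / a^2)) * ennreal (sqrt (2 * pi) * 1))"
      unfolding g1_def g2_def using a by (subst (1 2) gauss_nn) auto
    also have "\<dots> = ennreal (D * (2 * pi * M^2) / a^2)"
      using D a by (simp add: ennreal_mult[symmetric] field_simps)
    finally show "(\<integral>\<^sup>+z. ennreal (h z) \<partial>lborel) \<le> ennreal (D * (2 * pi * M^2) / a^2)" .
  qed
qed

lemma master_lower:
  fixes a c L :: real and h :: "real \<times> real \<Rightarrow> real"
  assumes a: "a \<ge> 1" and L: "L \<ge> 0"
    and hb: "\<And>\<xi> \<tau>. \<bar>\<xi> - a\<bar> \<le> 1 / a^2 \<Longrightarrow> \<bar>\<tau> - c\<bar> \<le> 1 \<Longrightarrow> L \<le> h (\<xi>, \<tau>)"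
  shows "ennreal (4 * L / a^2) \<le> (\<integral>\<^sup>+z. ennreal (h z) \<partial>lborel)"
proof -
  define I1 where "I1 = {a - 1 / a^2 .. a + 1 / a^2}"
  define I2 where "I2 = {c - 1 .. c + 1}"
  have e1: "emeasure lborel I1 = ennreal (2 / a^2)" unfolding I1_def
    by (subst emeasure_lborel_Icc) (use a in auto)
  have e2: "emeasure lborel I2 = ennreal 2" unfolding I2_def
    by (subst emeasure_lborel_Icc) auto
  have "ennreal (4 * L / a^2) = ennreal L * (emeasure lborel I1 * emeasure lborel I2)"
  proof -
    have p: "0 \<le> 2 / a^2" by simp
    have "ennreal L * (ennreal (2 / a^2) * ennreal 2) = ennreal L * ennreal (2 / a^2 * 2)"
      using p by (subst ennreal_mult) auto
    also have "\<dots> = ennreal (L * (2 / a^2 * 2))"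
      using p L by (subst ennreal_mult) auto
    also have "L * (2 / a^2 * 2) = 4 * L / a^2" by simp
    finally show ?thesis unfolding e1 e2 by simp
  qed
  also have "\<dots> = ennreal L * emeasure (lborel \<Otimes>\<^sub>M lborel) (I1 \<times> I2)"
    by (subst lborel.emeasure_pair_measure_Times) (auto simp: I1_def I2_def)
  also have "\<dots> = (\<integral>\<^sup>+z. ennreal L * indicator (I1 \<times> I2) z \<partial>(lborel \<Otimes>\<^sub>M lborel))"
    by (subst nn_integral_cmult_indicator) (auto simp: I1_def I2_def)
  also have "\<dots> \<le> (\<integral>\<^sup>+z. ennreal (h z) \<partial>(lborel \<Otimes>\<^sub>M lborel))"
  proof (intro nn_integral_mono)
    fix z :: "real \<times> real"
    obtain \<xi> \<tau> where z: "z = (\<xi>, \<tau>)" by (cases z)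
    show "ennreal L * indicator (I1 \<times> I2) z \<le> ennreal (h z)"
    proof (cases "z \<in> I1 \<times> I2")
      case True
      then have "\<bar>\<xi> - a\<bar> \<le> 1 / a^2" "\<bar>\<tau> - c\<bar> \<le> 1" by (auto simp: z I1_def I2_def)
      then show ?thesis using hb z True by (simp add: ennreal_leI)
    qed simp
  qed
  also have "\<dots> = (\<integral>\<^sup>+z. ennreal (h z) \<partial>lborel)" by (simp add: lborel_prod)
  finally show ?thesis .
qed

lemma J_tri: "japanese (x + y) \<le> japanese x * japanese y"
proof -
  have "\<bar>x + y\<bar> \<le> \<bar>x\<bar> + \<bar>y\<bar>" by (rule abs_triangle_ineq)
  moreover have "0 \<le> \<bar>x\<bar> * \<bar>y\<bar>" by simp
  moreover have "(1 + \<bar>x\<bar>) * (1 + \<bar>y\<bar>) = 1 + \<bar>x\<bar> + \<bar>y\<bar> + \<bar>x\<bar> * \<bar>y\<bar>" by (simp add: algebra_simps)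
  ultimately show ?thesis unfolding japanese_def by linarith
qed

lemma J_neg[simp]: "japanese (- x) = japanese x" by (simp add: japanese_def)

lemma J_mono: "\<bar>x\<bar> \<le> \<bar>y\<bar> \<Longrightarrow> japanese x \<le> japanese y" by (simp add: japanese_def)

lemma J_abs_le: "\<bar>x\<bar> \<le> japanese x" by (simp add: japanese_def)

lemma J_powr_upper: "japanese (x + y) powr r \<le> japanese x powr r * japanese y powr \<bar>r\<bar>"
proof (cases "r \<ge> 0")
  case True
  have "japanese (x + y) powr r \<le> (japanese x * japanese y) powr r"
    using True J_tri J_pos by (intro powr_mono2) (auto intro: less_imp_le)
  also have "\<dots> = japanese x powr r * japanese y powr r"
    using J_ge1[of x] J_ge1[of y] by (simp add: powr_mult)
  finally show ?thesis using True by simp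
next
  case False
  have "japanese x = japanese ((x + y) + (- y))" by simp
  also have "\<dots> \<le> japanese (x + y) * japanese y" using J_tri[of "x + y" "- y"] by simp
  finally have "japanese x / japanese y \<le> japanese (x + y)"
    using J_pos[of y] by (simp add: divide_le_eq)
  then have "japanese (x + y) powr r \<le> (japanese x / japanese y) powr r"
    using False J_pos by (intro powr_mono2') auto
  also have "\<dots> = japanese x powr r / japanese y powr r"
    using J_ge1[of x] J_ge1[of y] by (simp add: powr_divide)
  also have "\<dots> = japanese x powr r * japanese y powr \<bar>r\<bar>"
    using False by (simp add: powr_minus divide_inverse)
  finally show ?thesis .
qed

lemma J_powr_lower: "japanese x powr r / japanese y powr \<bar>r\<bar> \<le> japanese (x + y) powr r"
proof -
  have "japanese x powr r \<le> japanese (x + y) powr r * japanese (- y) powr \<bar>r\<bar>"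
    using J_powr_upper[of "x + y" "- y" r] by simp
  then show ?thesis using J_pos[of y] by (simp add: divide_le_eq)
qed

lemma powr_ge1_mono: "x \<ge> 1 \<Longrightarrow> a \<le> b \<Longrightarrow> x powr a \<le> (x::real) powr b"
  by (rule powr_mono) auto

lemma J_powr_ge1: "0 \<le> r \<Longrightarrow> 1 \<le> japanese x powr r"
  using J_ge1[of x] by (simp add: ge_one_powr_ge_zero)

lemma abs3: "\<bar>3 * p + 3 * q + r\<bar> \<le> 3 * \<bar>p\<bar> + 3 * \<bar>q\<bar> + \<bar>r::real\<bar>"
  by arith

lemma abs2: "\<bar>- (x * X) + y * Y\<bar> \<le> \<bar>x\<bar> * \<bar>X\<bar> + \<bar>y\<bar> * \<bar>Y::real\<bar>"
  by (metis abs_minus_cancel abs_mult abs_triangle_ineq)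

lemma phi_bound:
  assumes a: "a \<ge> 1"
  shows "\<bar>phi \<alpha> \<beta> a - phi \<alpha> \<beta> \<xi>\<bar> \<le> (7 * \<bar>\<alpha>\<bar> + \<bar>\<beta>\<bar>) * japanese (a^2 * (\<xi> - a)) ^ 3"
proof -
  define d where "d = \<xi> - a"
  define u where "u = a^2 * d"
  have a0: "a > 0" using a by simp
  have e: "phi \<alpha> \<beta> a - phi \<alpha> \<beta> \<xi> = - (\<alpha> * (3 * u + 3 * (a * d^2) + d^3)) + \<beta> * d"
    unfolding phi_def u_def d_def by (simp add: power2_eq_square power3_eq_cube algebra_simps)
  have a4: "a \<le> a^4"
  proof -
    have "a * 1 \<le> a * a^3" using a0 a by (intro mult_left_mono one_le_power) auto
    moreover have "a * a^3 = a^4" by (simp add: power3_eq_cube power4_eq_xxxx mult.assoc)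
    ultimately show ?thesis by simp
  qed
  have a6: "1 \<le> a^6" using a by (simp add: one_le_power)
  have a2: "1 \<le> a^2" using a by (simp add: one_le_power)
  have b1: "\<bar>a * d^2\<bar> \<le> u^2"
  proof -
    have "a * d^2 \<le> a^4 * d^2" using a4 by (intro mult_right_mono) auto
    also have "a^4 * d^2 = u^2" by (simp add: u_def power_mult_distrib power_mult[symmetric])
    finally show ?thesis using a0 by simp
  qed
  have b2: "\<bar>d^3\<bar> \<le> \<bar>u\<bar>^3"
  proof -
    have "1 * \<bar>d\<bar>^3 \<le> a^6 * \<bar>d\<bar>^3" using a6 by (intro mult_right_mono) auto
    also have "a^6 * \<bar>d\<bar>^3 = \<bar>u\<bar>^3" using a0 by (simp add: u_def abs_mult power_mult_distrib power_mult[symmetric])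
    finally show ?thesis by (simp add: power_abs)
  qed
  have b3: "\<bar>d\<bar> \<le> \<bar>u\<bar>"
  proof -
    have "1 * \<bar>d\<bar> \<le> a^2 * \<bar>d\<bar>" using a2 by (intro mult_right_mono) auto
    also have "a^2 * \<bar>d\<bar> = \<bar>u\<bar>" by (simp add: u_def abs_mult)
    finally show ?thesis by simp
  qed
  define J where "J = japanese u"
  have J1: "J \<ge> 1" using J_ge1 by (simp add: J_def)
  have Ju: "\<bar>u\<bar> \<le> J" by (simp add: J_def J_abs_le)
  have J3a: "\<bar>u\<bar> \<le> J^3"
  proof -
    have "J * 1 \<le> J * J^2" using J1 by (intro mult_left_mono one_le_power) auto
    then have "J \<le> J^3" by (simp add: power2_eq_square power3_eq_cube)
    with Ju show ?thesis by linarith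
  qed
  have J3b: "u^2 \<le> J^3"
  proof -
    have "u^2 = \<bar>u\<bar>^2" by simp
    also have "\<dots> \<le> J^2" using Ju by (intro power_mono) auto
    also have "\<dots> \<le> J^3" using J1 by (intro power_increasing) auto
    finally show ?thesis .
  qed
  have J3c: "\<bar>u\<bar>^3 \<le> J^3" using Ju by (intro power_mono) auto
  have X: "\<bar>3 * u + 3 * (a * d^2) + d^3\<bar> \<le> 7 * J^3"
    using abs3[of u "a * d^2" "d^3"] b1 b2 J3a J3b J3c by linarith
  have Y: "\<bar>d\<bar> \<le> J^3" using b3 J3a by linarith
  have "\<bar>phi \<alpha> \<beta> a - phi \<alpha> \<beta> \<xi>\<bar> \<le> \<bar>\<alpha>\<bar> * \<bar>3 * u + 3 * (a * d^2) + d^3\<bar> + \<bar>\<beta>\<bar> * \<bar>d\<bar>"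
    unfolding e by (rule abs2)
  also have "\<dots> \<le> \<bar>\<alpha>\<bar> * (7 * J^3) + \<bar>\<beta>\<bar> * J^3"
    using X Y by (intro add_mono mult_left_mono) auto
  also have "\<dots> = (7 * \<bar>\<alpha>\<bar> + \<bar>\<beta>\<bar>) * japanese (a^2 * (\<xi> - a)) ^ 3"
    by (simp add: J_def u_def d_def algebra_simps)
  finally show ?thesis .
qed

lemma J_u_ge: "a \<ge> 1 \<Longrightarrow> japanese (\<xi> - a) \<le> japanese (a^2 * (\<xi> - a))"
proof (rule J_mono)
  assume a: "a \<ge> 1"
  have "1 * \<bar>\<xi> - a\<bar> \<le> a^2 * \<bar>\<xi> - a\<bar>" using a by (intro mult_right_mono) (auto simp: one_le_power)
  then show "\<bar>\<xi> - a\<bar> \<le> \<bar>a^2 * (\<xi> - a)\<bar>" by (simp add: abs_mult)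
qed

lemma jxi_upper:
  assumes a: "a \<ge> 1"
  shows "japanese \<xi> powr t \<le> japanese a powr t * japanese (a^2 * (\<xi> - a)) powr \<bar>t\<bar>"
proof -
  have "japanese \<xi> powr t \<le> japanese a powr t * japanese (\<xi> - a) powr \<bar>t\<bar>"
    using J_powr_upper[of a "\<xi> - a" t] by simp
  also have "\<dots> \<le> japanese a powr t * japanese (a^2 * (\<xi> - a)) powr \<bar>t\<bar>"
    using J_u_ge[OF a, of \<xi>] J_pos by (intro mult_left_mono powr_mono2) (auto intro: less_imp_le)
  finally show ?thesis .
qed

lemma powr_sq: "(x::real) > 0 \<Longrightarrow> (x powr s)^2 = x powr (2 * s)"
  by (simp add: power2_eq_square powr_add[symmetric])

lemma exp_half_sq: "(exp (- ((u::real)^2) / 2))^2 = exp (- (u^2))"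
  by (simp add: power2_eq_square exp_add[symmetric])

lemma J_cube_bound:
  assumes "\<bar>x\<bar> \<le> K * japanese u ^ 3" "K \<ge> 0"
  shows "japanese x \<le> (1 + K) * japanese u ^ 3"
proof -
  have "1 \<le> japanese u ^ 3" using J_ge1 by (simp add: one_le_power)
  then show ?thesis using assms unfolding japanese_def[of x] by (simp add: algebra_simps)
qed

lemma ge1_mult: "1 \<le> x \<Longrightarrow> 1 \<le> y \<Longrightarrow> 1 \<le> x * (y::real)"
  using mult_mono[of 1 x 1 y] by simp

lemma hb:
  assumes a: "a \<ge> 1" and K: "7 * \<bar>\<alpha>\<bar> + \<bar>\<beta>\<bar> \<le> K" and cb: "b \<le> 0 \<or> c = phi \<alpha> \<beta> a"
  shows "japanese (\<tau> - phi \<alpha> \<beta> \<xi>) powr (2 * b) \<le>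
     (1 + K) powr (2 * \<bar>b\<bar>) * japanese (a^2 * (\<xi> - a)) powr (6 * \<bar>b\<bar>) * japanese (\<tau> - c) powr (2 * \<bar>b\<bar>)"
proof (cases "b \<le> 0")
  case True
  have K0: "K \<ge> 0" using K by linarith
  have "japanese (\<tau> - phi \<alpha> \<beta> \<xi>) powr (2 * b) \<le> 1"
    using True powr_mono[of "2 * b" 0 "japanese (\<tau> - phi \<alpha> \<beta> \<xi>)"] J_ge1[of "\<tau> - phi \<alpha> \<beta> \<xi>"] by simp
  also have "1 \<le> (1 + K) powr (2 * \<bar>b\<bar>) * japanese (a^2 * (\<xi> - a)) powr (6 * \<bar>b\<bar>) * japanese (\<tau> - c) powr (2 * \<bar>b\<bar>)"
  proof -
    have f1: "1 \<le> (1 + K) powr (2 * \<bar>b\<bar>)" using K0 by (simp add: ge_one_powr_ge_zero)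
    have f2: "1 \<le> japanese (a^2 * (\<xi> - a)) powr (6 * \<bar>b\<bar>)" by (rule J_powr_ge1) simp
    have f3: "1 \<le> japanese (\<tau> - c) powr (2 * \<bar>b\<bar>)" by (rule J_powr_ge1) simp
    show ?thesis by (rule ge1_mult[OF ge1_mult[OF f1 f2] f3])
  qed
  finally show ?thesis .
next
  case False
  then have c: "c = phi \<alpha> \<beta> a" and b: "b > 0" using cb by auto
  have K0: "K \<ge> 0" using K by linarith
  define u where "u = a^2 * (\<xi> - a)"
  have pb: "\<bar>phi \<alpha> \<beta> a - phi \<alpha> \<beta> \<xi>\<bar> \<le> K * japanese u ^ 3"
  proof -
    have "\<bar>phi \<alpha> \<beta> a - phi \<alpha> \<beta> \<xi>\<bar> \<le> (7 * \<bar>\<alpha>\<bar> + \<bar>\<beta>\<bar>) * japanese u ^ 3"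
      using phi_bound[OF a, of \<alpha> \<beta> \<xi>] by (simp add: u_def)
    also have "\<dots> \<le> K * japanese u ^ 3"
      using K J_pos[of u] by (intro mult_right_mono) auto
    finally show ?thesis .
  qed
  have "japanese (\<tau> - phi \<alpha> \<beta> \<xi>) = japanese ((\<tau> - c) + (phi \<alpha> \<beta> a - phi \<alpha> \<beta> \<xi>))" by (simp add: c)
  also have "\<dots> \<le> japanese (\<tau> - c) * japanese (phi \<alpha> \<beta> a - phi \<alpha> \<beta> \<xi>)" by (rule J_tri)
  also have "\<dots> \<le> japanese (\<tau> - c) * ((1 + K) * japanese u ^ 3)"
    using J_cube_bound[OF pb K0] J_pos by (intro mult_left_mono) (auto intro: less_imp_le)
  finally have le: "japanese (\<tau> - phi \<alpha> \<beta> \<xi>) \<le> japanese (\<tau> - c) * ((1 + K) * japanese u ^ 3)" .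
  have "japanese (\<tau> - phi \<alpha> \<beta> \<xi>) powr (2 * b) \<le> (japanese (\<tau> - c) * ((1 + K) * japanese u ^ 3)) powr (2 * b)"
    using le b J_pos by (intro powr_mono2) (auto intro: less_imp_le)
  also have "\<dots> = japanese (\<tau> - c) powr (2 * b) * ((1 + K) powr (2 * b) * (japanese u ^ 3) powr (2 * b))"
    using K0 J_pos[of "\<tau> - c"] J_pos[of u] by (simp add: powr_mult)
  also have "(japanese u ^ 3) powr (2 * b) = japanese u powr (6 * b)"
  proof -
    have "japanese u ^ 3 = japanese u powr 3" using J_pos[of u] by (simp add: powr_numeral)
    then show ?thesis by (simp add: powr_powr)
  qed
  finally have "japanese (\<tau> - phi \<alpha> \<beta> \<xi>) powr (2 * b) \<le> japanese (\<tau> - c) powr (2 * b) * ((1 + K) powr (2 * b) * japanese u powr (6 * b))" .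
  moreover have "\<bar>b\<bar> = b" using b by simp
  ultimately show ?thesis unfolding u_def by (simp only: mult_ac)
qed

lemma H1:
  assumes a: "a \<ge> 1" and K1: "K1 \<ge> 0"
    and hbnd: "japanese (\<tau> - phi \<alpha> \<beta> \<xi>) powr (2 * b) \<le> K1 * japanese (a^2 * (\<xi> - a)) powr (6 * \<bar>b\<bar>) * japanese (\<tau> - c) powr (2 * \<bar>b\<bar>)"
  shows "(japanese \<xi> powr s * japanese (\<tau> - phi \<alpha> \<beta> \<xi>) powr b * (g * (exp (- ((a^2 * (\<xi> - a))^2) / 2) * exp (- ((\<tau> - c)^2) / 2))))^2
    \<le> (g^2 * japanese a powr (2 * s) * K1) * (japanese (a^2 * (\<xi> - a)) powr (2 * \<bar>s\<bar> + 6 * \<bar>b\<bar>) * japanese (\<tau> - c) powr (2 * \<bar>s\<bar> + 6 * \<bar>b\<bar>) *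
        exp (- ((a^2 * (\<xi> - a))^2)) * exp (- ((\<tau> - c)^2)))"
proof -
  define u where "u = a^2 * (\<xi> - a)"
  define v where "v = \<tau> - c"
  define P1 where "P1 = japanese \<xi> powr (2 * s)"
  define P2 where "P2 = japanese (\<tau> - phi \<alpha> \<beta> \<xi>) powr (2 * b)"
  define E where "E = g^2 * (exp (- (u^2)) * exp (- (v^2)))"
  have E0: "E \<ge> 0" by (simp add: E_def)
  have lhs: "(japanese \<xi> powr s * japanese (\<tau> - phi \<alpha> \<beta> \<xi>) powr b * (g * (exp (- (u^2) / 2) * exp (- (v^2) / 2))))^2
      = P1 * P2 * E"
    unfolding P1_def P2_def E_def power_mult_distrib powr_sq[OF J_pos] exp_half_sq by (simp only: mult_ac)
  have p1: "P1 \<le> japanese a powr (2 * s) * japanese u powr (2 * \<bar>s\<bar>)"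
    using jxi_upper[OF a, of \<xi> "2 * s"] by (simp add: P1_def u_def abs_mult)
  have p2: "P2 \<le> K1 * japanese u powr (6 * \<bar>b\<bar>) * japanese v powr (2 * \<bar>b\<bar>)"
    using hbnd by (simp add: P2_def u_def v_def)
  have "P1 * P2 \<le> (japanese a powr (2 * s) * japanese u powr (2 * \<bar>s\<bar>)) * (K1 * japanese u powr (6 * \<bar>b\<bar>) * japanese v powr (2 * \<bar>b\<bar>))"
    using p1 p2 K1 by (intro mult_mono) (auto simp: P2_def)
  also have "\<dots> = (japanese a powr (2 * s) * K1) * (japanese u powr (2 * \<bar>s\<bar> + 6 * \<bar>b\<bar>) * japanese v powr (2 * \<bar>b\<bar>))"
    by (simp add: powr_add mult_ac)
  also have "\<dots> \<le> (japanese a powr (2 * s) * K1) * (japanese u powr (2 * \<bar>s\<bar> + 6 * \<bar>b\<bar>) * japanese v powr (2 * \<bar>s\<bar> + 6 * \<bar>b\<bar>))"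
    using K1 J_ge1[of v] by (intro mult_left_mono powr_mono) auto
  finally have "P1 * P2 * E \<le> (japanese a powr (2 * s) * K1) * (japanese u powr (2 * \<bar>s\<bar> + 6 * \<bar>b\<bar>) * japanese v powr (2 * \<bar>s\<bar> + 6 * \<bar>b\<bar>)) * E"
    using E0 by (rule mult_right_mono)
  then show ?thesis
    unfolding lhs[unfolded u_def v_def] unfolding E_def u_def v_def by (simp only: mult_ac)
qed

lemma phi_K:
  assumes a: "a \<ge> 1" and K: "7 * \<bar>\<alpha>\<bar> + \<bar>\<beta>\<bar> \<le> K"
  shows "\<bar>phi \<alpha> \<beta> a - phi \<alpha> \<beta> \<xi>\<bar> \<le> K * japanese (a^2 * (\<xi> - a)) ^ 3"
proof -
  have "\<bar>phi \<alpha> \<beta> a - phi \<alpha> \<beta> \<xi>\<bar> \<le> (7 * \<bar>\<alpha>\<bar> + \<bar>\<beta>\<bar>) * japanese (a^2 * (\<xi> - a)) ^ 3"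
    using phi_bound[OF a] .
  also have "\<dots> \<le> K * japanese (a^2 * (\<xi> - a)) ^ 3"
    using K J_pos[of "a^2 * (\<xi> - a)"] by (intro mult_right_mono) auto
  finally show ?thesis .
qed

lemma H2_upper:
  assumes a: "a \<ge> 1" and K: "7 * \<bar>\<alpha>\<bar> + \<bar>\<beta>\<bar> \<le> K"
  shows "(japanese \<xi> powr s * japanese (\<tau> - phi \<alpha> \<beta> \<xi>) powr (b - 1) * (\<bar>\<xi>\<bar> * (g * (exp (- ((a^2 * (\<xi> - a))^2) / 2) * exp (- ((\<tau> - c)^2) / 2)))))^2
    \<le> (g^2 * japanese a powr (2 * s + 2) * (japanese (c - phi \<alpha> \<beta> a) * (1 + K)) powr \<bar>2 * (b - 1)\<bar>) *
       (japanese (a^2 * (\<xi> - a)) powr (\<bar>2 * s + 2\<bar> + 3 * \<bar>2 * (b - 1)\<bar>) * japanese (\<tau> - c) powr (\<bar>2 * s + 2\<bar> + 3 * \<bar>2 * (b - 1)\<bar>) *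
        exp (- ((a^2 * (\<xi> - a))^2)) * exp (- ((\<tau> - c)^2)))"
proof -
  define u where "u = a^2 * (\<xi> - a)"
  define v where "v = \<tau> - c"
  define e where "e = \<bar>2 * (b - 1)\<bar>"
  define N2 where "N2 = \<bar>2 * s + 2\<bar> + 3 * e"
  define Q where "Q = japanese (c - phi \<alpha> \<beta> a) * (1 + K)"
  have K0: "K \<ge> 0" using K by linarith
  have Q0: "Q > 0" using K0 J_pos by (simp add: Q_def)
  define P1 where "P1 = japanese \<xi> powr (2 * s)"
  define P2 where "P2 = japanese (\<tau> - phi \<alpha> \<beta> \<xi>) powr (2 * (b - 1))"
  define E where "E = g^2 * (exp (- (u^2)) * exp (- (v^2)))"
  have E0: "E \<ge> 0" by (simp add: E_def)
  have lhs: "(japanese \<xi> powr s * japanese (\<tau> - phi \<alpha> \<beta> \<xi>) powr (b - 1) * (\<bar>\<xi>\<bar> * (g * (exp (- (u^2) / 2) * exp (- (v^2) / 2)))))^2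
      = (\<xi>^2 * P1) * P2 * E"
    unfolding P1_def P2_def E_def power_mult_distrib powr_sq[OF J_pos] exp_half_sq power2_abs by (simp only: mult_ac)
  have "\<xi>^2 \<le> japanese \<xi> ^ 2"
    using J_abs_le[of \<xi>] by (metis abs_ge_zero power2_abs power_mono)
  also have "\<dots> = japanese \<xi> powr 2" using J_pos[of \<xi>] by (simp add: powr_numeral)
  finally have x2: "\<xi>^2 \<le> japanese \<xi> powr 2" .
  have "\<xi>^2 * P1 \<le> japanese \<xi> powr 2 * P1" using x2 by (intro mult_right_mono) (auto simp: P1_def)
  also have "\<dots> = japanese \<xi> powr (2 * s + 2)" by (simp add: P1_def powr_add[symmetric] add.commute)
  also have "\<dots> \<le> japanese a powr (2 * s + 2) * japanese u powr \<bar>2 * s + 2\<bar>"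
    using jxi_upper[OF a] by (simp add: u_def)
  finally have p1: "\<xi>^2 * P1 \<le> japanese a powr (2 * s + 2) * japanese u powr \<bar>2 * s + 2\<bar>" .
  have "japanese (\<tau> - phi \<alpha> \<beta> \<xi>) = japanese (v + ((c - phi \<alpha> \<beta> a) + (phi \<alpha> \<beta> a - phi \<alpha> \<beta> \<xi>)))"
    by (simp add: v_def)
  also have "\<dots> \<le> japanese v * (japanese (c - phi \<alpha> \<beta> a) * japanese (phi \<alpha> \<beta> a - phi \<alpha> \<beta> \<xi>))"
    using J_tri J_pos by (meson J_tri mult_left_mono order_trans less_imp_le)
  also have "\<dots> \<le> japanese v * (japanese (c - phi \<alpha> \<beta> a) * ((1 + K) * japanese u ^ 3))"
    using J_cube_bound[OF phi_K[OF a K] K0, of \<xi>] J_pos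
    by (intro mult_left_mono) (auto intro: less_imp_le simp: u_def)
  also have "\<dots> = japanese v * (Q * japanese u ^ 3)" by (simp add: Q_def)
  finally have jle: "japanese (\<tau> - phi \<alpha> \<beta> \<xi>) \<le> japanese v * (Q * japanese u ^ 3)" .
  have "P2 \<le> japanese (\<tau> - phi \<alpha> \<beta> \<xi>) powr e"
    unfolding P2_def e_def using J_ge1 by (intro powr_mono) auto
  also have "\<dots> \<le> (japanese v * (Q * japanese u ^ 3)) powr e"
    using jle J_pos by (intro powr_mono2) (auto simp: e_def intro: less_imp_le)
  also have "\<dots> = japanese v powr e * (Q powr e * (japanese u ^ 3) powr e)"
    using Q0 J_pos[of v] J_pos[of u] by (simp add: powr_mult)
  also have "(japanese u ^ 3) powr e = japanese u powr (3 * e)"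
  proof -
    have "japanese u ^ 3 = japanese u powr 3" using J_pos[of u] by (simp add: powr_numeral)
    then show ?thesis by (simp add: powr_powr)
  qed
  finally have p2: "P2 \<le> japanese v powr e * (Q powr e * japanese u powr (3 * e))" .
  have "(\<xi>^2 * P1) * P2 \<le> (japanese a powr (2 * s + 2) * japanese u powr \<bar>2 * s + 2\<bar>) * (japanese v powr e * (Q powr e * japanese u powr (3 * e)))"
    by (rule mult_mono[OF p1 p2]) (auto simp: P2_def)
  also have "\<dots> = (japanese a powr (2 * s + 2) * Q powr e) * (japanese u powr N2 * japanese v powr e)"
    by (simp add: N2_def powr_add mult_ac)
  also have "\<dots> \<le> (japanese a powr (2 * s + 2) * Q powr e) * (japanese u powr N2 * japanese v powr N2)"
    using J_ge1[of v] by (intro mult_left_mono powr_mono) (auto simp: N2_def e_def)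
  finally have "(\<xi>^2 * P1) * P2 * E \<le> (japanese a powr (2 * s + 2) * Q powr e) * (japanese u powr N2 * japanese v powr N2) * E"
    using E0 by (rule mult_right_mono)
  then show ?thesis
    unfolding lhs[unfolded u_def v_def] unfolding E_def u_def v_def N2_def e_def Q_def by (simp only: mult_ac)
qed

lemma box_u:
  assumes a: "a \<ge> 1" and box: "\<bar>\<xi> - a\<bar> \<le> 1 / a^2"
  shows "\<bar>a^2 * (\<xi> - a)\<bar> \<le> 1" "japanese (a^2 * (\<xi> - a)) ^ 3 \<le> 8"
proof -
  have a2: "a^2 > 0" using a by simp
  have "a^2 * \<bar>\<xi> - a\<bar> \<le> a^2 * (1 / a^2)" using box a2 by (intro mult_left_mono) auto
  then show u1: "\<bar>a^2 * (\<xi> - a)\<bar> \<le> 1" using a2 by (simp add: abs_mult)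
  have "japanese (a^2 * (\<xi> - a)) \<le> 2" using u1 by (simp add: japanese_def)
  then have "japanese (a^2 * (\<xi> - a)) ^ 3 \<le> 2 ^ 3" using J_pos by (intro power_mono) (auto intro: less_imp_le)
  then show "japanese (a^2 * (\<xi> - a)) ^ 3 \<le> 8" by simp
qed

lemma RA:
  assumes a: "a \<ge> 1" and box: "\<bar>\<xi> - a\<bar> \<le> 1 / a^2" and tb: "\<bar>\<tau> - phi \<alpha> \<beta>1 a\<bar> \<le> 1"
    and K: "K = 7 * \<bar>\<alpha>\<bar> + \<bar>\<beta>1\<bar> + \<bar>\<beta>2\<bar>"
  shows "japanese (\<tau> - phi \<alpha> \<beta>2 \<xi>) \<le> (2 + 10 * K) * a"
proof -
  have K0: "K \<ge> 0" using K by simp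
  have eq: "\<tau> - phi \<alpha> \<beta>2 \<xi> = (\<tau> - phi \<alpha> \<beta>1 a) + (phi \<alpha> \<beta>1 a - phi \<alpha> \<beta>1 \<xi>) + (\<beta>2 - \<beta>1) * \<xi>"
    by (simp add: phi_def algebra_simps)
  have p: "\<bar>phi \<alpha> \<beta>1 a - phi \<alpha> \<beta>1 \<xi>\<bar> \<le> K * 8"
  proof -
    have "\<bar>phi \<alpha> \<beta>1 a - phi \<alpha> \<beta>1 \<xi>\<bar> \<le> K * japanese (a^2 * (\<xi> - a)) ^ 3"
      using K by (intro phi_K[OF a]) simp
    also have "\<dots> \<le> K * 8" using box_u[OF a box] K0 by (intro mult_left_mono) auto
    finally show ?thesis .
  qed
  have xi: "\<bar>\<xi>\<bar> \<le> a + 1"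
  proof -
    have "1 / a^2 \<le> 1" using a by (simp add: one_le_power)
    then show ?thesis using box a by linarith
  qed
  have bb: "\<bar>(\<beta>2 - \<beta>1) * \<xi>\<bar> \<le> K * (a + 1)"
  proof -
    have "\<bar>\<beta>2 - \<beta>1\<bar> \<le> K" using K by linarith
    then have "\<bar>\<beta>2 - \<beta>1\<bar> * \<bar>\<xi>\<bar> \<le> K * (a + 1)" using xi K0 by (intro mult_mono) auto
    then show ?thesis by (simp add: abs_mult)
  qed
  have "\<bar>\<tau> - phi \<alpha> \<beta>2 \<xi>\<bar> \<le> 1 + K * 8 + K * (a + 1)"
    unfolding eq using tb p bb by linarith
  moreover have "K * a \<ge> K" using K0 a by (simp add: mult_le_cancel_left1)
  ultimately show ?thesis using a unfolding japanese_def by (simp add: algebra_simps)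
qed

lemma RB:
  assumes a: "a \<ge> 1" and box: "\<bar>\<xi> - a\<bar> \<le> 1 / a^2" and tb: "\<bar>\<tau> - phi \<alpha> \<beta>2 a\<bar> \<le> 1"
    and K: "K = 7 * \<bar>\<alpha>\<bar> + \<bar>\<beta>1\<bar> + \<bar>\<beta>2\<bar>"
  shows "japanese (\<tau> - phi \<alpha> \<beta>2 \<xi>) \<le> 2 + 8 * K"
proof -
  have K0: "K \<ge> 0" using K by simp
  have p: "\<bar>phi \<alpha> \<beta>2 a - phi \<alpha> \<beta>2 \<xi>\<bar> \<le> K * 8"
  proof -
    have "\<bar>phi \<alpha> \<beta>2 a - phi \<alpha> \<beta>2 \<xi>\<bar> \<le> K * japanese (a^2 * (\<xi> - a)) ^ 3"
      using K by (intro phi_K[OF a]) simp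
    also have "\<dots> \<le> K * 8" using box_u[OF a box] K0 by (intro mult_left_mono) auto
    finally show ?thesis .
  qed
  have "\<bar>\<tau> - phi \<alpha> \<beta>2 \<xi>\<bar> \<le> 1 + K * 8" using tb p by linarith
  then show ?thesis unfolding japanese_def by simp
qed

lemma powr_lower_R:
  assumes "1 \<le> x" "x \<le> R"
  shows "R powr (min 0 e) \<le> x powr (e::real)"
proof (cases "e \<ge> 0")
  case True
  then have "R powr (min 0 e) = 1" using assms by simp
  also have "1 \<le> x powr e" using assms True by (simp add: ge_one_powr_ge_zero)
  finally show ?thesis .
next
  case False
  then have "min 0 e = e" by simp
  then show ?thesis using assms False by (simp add: powr_mono2')
qed

lemma H2_lower:
  assumes a: "a \<ge> 2" and box: "\<bar>\<xi> - a\<bar> \<le> 1 / a^2" "\<bar>\<tau> - c\<bar> \<le> 1"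
    and R: "japanese (\<tau> - phi \<alpha> \<beta> \<xi>) \<le> R"
  shows "g^2 * (a^2 / 4) * (japanese a powr (2 * s) / 2 powr \<bar>2 * s\<bar>) * R powr (min 0 (2 * (b - 1))) * (exp (- 1) * exp (- 1))
    \<le> (japanese \<xi> powr s * japanese (\<tau> - phi \<alpha> \<beta> \<xi>) powr (b - 1) * (\<bar>\<xi>\<bar> * (g * (exp (- ((a^2 * (\<xi> - a))^2) / 2) * exp (- ((\<tau> - c)^2) / 2)))))^2"
proof -
  have a1: "a \<ge> 1" using a by simp
  define u where "u = a^2 * (\<xi> - a)"
  define v where "v = \<tau> - c"
  define P1 where "P1 = japanese \<xi> powr (2 * s)"
  define P2 where "P2 = japanese (\<tau> - phi \<alpha> \<beta> \<xi>) powr (2 * (b - 1))"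
  define E where "E = g^2 * (exp (- (u^2)) * exp (- (v^2)))"
  have lhs: "(japanese \<xi> powr s * japanese (\<tau> - phi \<alpha> \<beta> \<xi>) powr (b - 1) * (\<bar>\<xi>\<bar> * (g * (exp (- (u^2) / 2) * exp (- (v^2) / 2)))))^2
      = \<xi>^2 * P1 * P2 * E"
    unfolding P1_def P2_def E_def power_mult_distrib powr_sq[OF J_pos] exp_half_sq power2_abs by (simp only: mult_ac)
  have inv: "1 / a^2 \<le> 1" using a1 by (simp add: one_le_power)
  have x1: "a^2 / 4 \<le> \<xi>^2"
  proof -
    have "a / 2 \<le> \<xi>" using box(1) inv a by linarith
    then have "(a / 2)^2 \<le> \<xi>^2" using a by (intro power_mono) auto
    then show ?thesis by (simp add: power_divide)
  qed
  have x2: "japanese a powr (2 * s) / 2 powr \<bar>2 * s\<bar> \<le> P1"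
  proof -
    have "japanese (\<xi> - a) \<le> 2" using box(1) inv by (simp add: japanese_def)
    then have "japanese (\<xi> - a) powr \<bar>2 * s\<bar> \<le> 2 powr \<bar>2 * s\<bar>" using J_pos by (intro powr_mono2) (auto intro: less_imp_le)
    then have "japanese a powr (2 * s) / 2 powr \<bar>2 * s\<bar> \<le> japanese a powr (2 * s) / japanese (\<xi> - a) powr \<bar>2 * s\<bar>"
    proof (rule divide_left_mono)
      have "0 < japanese (\<xi> - a) powr \<bar>2 * s\<bar>" using J_pos[of "\<xi> - a"] by simp
      moreover have "0 < (2::real) powr \<bar>2 * s\<bar>" by simp
      ultimately show "0 < 2 powr \<bar>2 * s\<bar> * japanese (\<xi> - a) powr \<bar>2 * s\<bar>" by simp
    qed simp
    also have "\<dots> \<le> P1" using J_powr_lower[of a "2 * s" "\<xi> - a"] by (simp add: P1_def)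
    finally show ?thesis .
  qed
  have x3: "R powr (min 0 (2 * (b - 1))) \<le> P2"
    unfolding P2_def using J_ge1 R by (rule powr_lower_R)
  have x4: "g^2 * (exp (- 1) * exp (- 1)) \<le> E"
  proof -
    have "\<bar>u\<bar> \<le> 1" using box_u(1)[OF a1 box(1)] by (simp add: u_def)
    then have "u^2 \<le> 1" using abs_square_le_1 by blast
    moreover have "v^2 \<le> 1" using box(2) by (simp add: v_def abs_square_le_1)
    ultimately have "exp (- 1) * exp (- 1) \<le> exp (- (u^2)) * exp (- (v^2))"
      by (intro mult_mono) auto
    then show ?thesis unfolding E_def by (intro mult_left_mono) auto
  qed
  have "(a^2 / 4) * (japanese a powr (2 * s) / 2 powr \<bar>2 * s\<bar>) \<le> \<xi>^2 * P1"
    by (rule mult_mono[OF x1 x2]) auto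
  then have "(a^2 / 4) * (japanese a powr (2 * s) / 2 powr \<bar>2 * s\<bar>) * R powr (min 0 (2 * (b - 1))) \<le> \<xi>^2 * P1 * P2"
    by (rule mult_mono[OF _ x3]) (auto simp: P1_def)
  then have "(a^2 / 4) * (japanese a powr (2 * s) / 2 powr \<bar>2 * s\<bar>) * R powr (min 0 (2 * (b - 1))) * (g^2 * (exp (- 1) * exp (- 1))) \<le> \<xi>^2 * P1 * P2 * E"
    by (rule mult_mono[OF _ x4]) (auto simp: P1_def P2_def)
  then show ?thesis
    unfolding lhs[unfolded u_def v_def] by (simp only: mult_ac)
qed

definition XI :: "real \<Rightarrow> real \<Rightarrow> real \<Rightarrow> real \<Rightarrow> (real \<times> real \<Rightarrow> complex) \<Rightarrow> ennreal" where
  "XI \<alpha> \<beta> s b w = (\<integral>\<^sup>+ p. ennreal ((japanese (fst p) powr s * japanese (snd p - phi \<alpha> \<beta> (fst p)) powr b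
                * cmod (fourier2 w p))\<^sup>2) \<partial>lborel)"

lemma Xnorm_XI: "Xnorm \<alpha> \<beta> s b w = sqrt (enn2real (XI \<alpha> \<beta> s b w))"
  unfolding Xnorm_def XI_def ..

lemma I1_bound:
  assumes a: "a \<ge> 1" and K: "7 * \<bar>\<alpha>\<bar> + \<bar>\<beta>\<bar> \<le> K" and cb: "b \<le> 0 \<or> c = phi \<alpha> \<beta> a"
    and B: "\<forall>a c D h. a \<ge> 1 \<longrightarrow> D \<ge> 0 \<longrightarrow>
     (\<forall>\<xi> \<tau>. h (\<xi>, \<tau>) \<le> D * (japanese (a^2 * (\<xi> - a)) powr (2 * \<bar>s\<bar> + 6 * \<bar>b\<bar>) * japanese (\<tau> - c) powr (2 * \<bar>s\<bar> + 6 * \<bar>b\<bar>) *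
         exp (- ((a^2 * (\<xi> - a))^2)) * exp (- ((\<tau> - c)^2)))) \<longrightarrow>
     (\<integral>\<^sup>+z. ennreal (h z) \<partial>lborel) \<le> ennreal (D * B / a^2)"
  shows "XI \<alpha> \<beta> s b (wA a c) \<le> ennreal ((gA a^2 * japanese a powr (2 * s) * (1 + K) powr (2 * \<bar>b\<bar>)) * B / a^2)"
proof -
  have K0: "K \<ge> 0" using K by linarith
  show ?thesis
    unfolding XI_def
  proof (rule B[rule_format, OF a])
    show "0 \<le> gA a^2 * japanese a powr (2 * s) * (1 + K) powr (2 * \<bar>b\<bar>)" by simp
    fix \<xi> \<tau>
    have "(japanese (fst (\<xi>, \<tau>)) powr s * japanese (snd (\<xi>, \<tau>) - phi \<alpha> \<beta> (fst (\<xi>, \<tau>))) powr b * cmod (fourier2 (wA a c) (\<xi>, \<tau>)))^2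
      = (japanese \<xi> powr s * japanese (\<tau> - phi \<alpha> \<beta> \<xi>) powr b * (gA a * (exp (- ((a^2 * (\<xi> - a))^2) / 2) * exp (- ((\<tau> - c)^2) / 2))))^2"
      using a by (simp add: fourier_wA)
    also have "\<dots> \<le> (gA a^2 * japanese a powr (2 * s) * (1 + K) powr (2 * \<bar>b\<bar>)) * (japanese (a^2 * (\<xi> - a)) powr (2 * \<bar>s\<bar> + 6 * \<bar>b\<bar>) * japanese (\<tau> - c) powr (2 * \<bar>s\<bar> + 6 * \<bar>b\<bar>) *
        exp (- ((a^2 * (\<xi> - a))^2)) * exp (- ((\<tau> - c)^2)))"
      by (rule H1[OF a _ hb[OF a K cb]]) simp
    finally show "(japanese (fst (\<xi>, \<tau>)) powr s * japanese (snd (\<xi>, \<tau>) - phi \<alpha> \<beta> (fst (\<xi>, \<tau>))) powr b * cmod (fourier2 (wA a c) (\<xi>, \<tau>)))^2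
      \<le> (gA a^2 * japanese a powr (2 * s) * (1 + K) powr (2 * \<bar>b\<bar>)) * (japanese (a^2 * (\<xi> - a)) powr (2 * \<bar>s\<bar> + 6 * \<bar>b\<bar>) * japanese (\<tau> - c) powr (2 * \<bar>s\<bar> + 6 * \<bar>b\<bar>) *
        exp (- ((a^2 * (\<xi> - a))^2)) * exp (- ((\<tau> - c)^2)))" .
  qed
qed

lemma I2_finite:
  assumes a: "a \<ge> 1" and K: "7 * \<bar>\<alpha>\<bar> + \<bar>\<beta>\<bar> \<le> K"
    and B: "\<forall>a c D h. a \<ge> 1 \<longrightarrow> D \<ge> 0 \<longrightarrow>
     (\<forall>\<xi> \<tau>. h (\<xi>, \<tau>) \<le> D * (japanese (a^2 * (\<xi> - a)) powr (\<bar>2 * s + 2\<bar> + 3 * \<bar>2 * (b - 1)\<bar>) * japanese (\<tau> - c) powr (\<bar>2 * s + 2\<bar> + 3 * \<bar>2 * (b - 1)\<bar>) *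
         exp (- ((a^2 * (\<xi> - a))^2)) * exp (- ((\<tau> - c)^2)))) \<longrightarrow>
     (\<integral>\<^sup>+z. ennreal (h z) \<partial>lborel) \<le> ennreal (D * B / a^2)"
  shows "XI \<alpha> \<beta> s (b - 1) (dx (wA a c)) < \<infinity>"
proof -
  have K0: "K \<ge> 0" using K by linarith
  have "XI \<alpha> \<beta> s (b - 1) (dx (wA a c)) \<le> ennreal ((gA a^2 * japanese a powr (2 * s + 2) * (japanese (c - phi \<alpha> \<beta> a) * (1 + K)) powr \<bar>2 * (b - 1)\<bar>) * B / a^2)"
    unfolding XI_def
  proof (rule B[rule_format, OF a])
    show "0 \<le> gA a^2 * japanese a powr (2 * s + 2) * (japanese (c - phi \<alpha> \<beta> a) * (1 + K)) powr \<bar>2 * (b - 1)\<bar>" by simp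
    fix \<xi> \<tau>
    have "(japanese (fst (\<xi>, \<tau>)) powr s * japanese (snd (\<xi>, \<tau>) - phi \<alpha> \<beta> (fst (\<xi>, \<tau>))) powr (b - 1) * cmod (fourier2 (dx (wA a c)) (\<xi>, \<tau>)))^2
      = (japanese \<xi> powr s * japanese (\<tau> - phi \<alpha> \<beta> \<xi>) powr (b - 1) * (\<bar>\<xi>\<bar> * (gA a * (exp (- ((a^2 * (\<xi> - a))^2) / 2) * exp (- ((\<tau> - c)^2) / 2)))))^2"
      using a by (simp add: fourier_dx_wA)
    also have "\<dots> \<le> (gA a^2 * japanese a powr (2 * s + 2) * (japanese (c - phi \<alpha> \<beta> a) * (1 + K)) powr \<bar>2 * (b - 1)\<bar>) *
       (japanese (a^2 * (\<xi> - a)) powr (\<bar>2 * s + 2\<bar> + 3 * \<bar>2 * (b - 1)\<bar>) * japanese (\<tau> - c) powr (\<bar>2 * s + 2\<bar> + 3 * \<bar>2 * (b - 1)\<bar>) *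
        exp (- ((a^2 * (\<xi> - a))^2)) * exp (- ((\<tau> - c)^2)))"
      by (rule H2_upper[OF a K])
    finally show "(japanese (fst (\<xi>, \<tau>)) powr s * japanese (snd (\<xi>, \<tau>) - phi \<alpha> \<beta> (fst (\<xi>, \<tau>))) powr (b - 1) * cmod (fourier2 (dx (wA a c)) (\<xi>, \<tau>)))^2
      \<le> (gA a^2 * japanese a powr (2 * s + 2) * (japanese (c - phi \<alpha> \<beta> a) * (1 + K)) powr \<bar>2 * (b - 1)\<bar>) *
       (japanese (a^2 * (\<xi> - a)) powr (\<bar>2 * s + 2\<bar> + 3 * \<bar>2 * (b - 1)\<bar>) * japanese (\<tau> - c) powr (\<bar>2 * s + 2\<bar> + 3 * \<bar>2 * (b - 1)\<bar>) *
        exp (- ((a^2 * (\<xi> - a))^2)) * exp (- ((\<tau> - c)^2)))" .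
  qed
  also have "\<dots> < \<infinity>" by simp
  finally show ?thesis .
qed

lemma I2_lower:
  assumes a: "a \<ge> 2" and R: "\<And>\<xi> \<tau>. \<bar>\<xi> - a\<bar> \<le> 1 / a^2 \<Longrightarrow> \<bar>\<tau> - c\<bar> \<le> 1 \<Longrightarrow> japanese (\<tau> - phi \<alpha> \<beta> \<xi>) \<le> R"
  shows "ennreal (4 * (gA a^2 * (a^2 / 4) * (japanese a powr (2 * s) / 2 powr \<bar>2 * s\<bar>) * R powr (min 0 (2 * (b - 1))) * (exp (- 1) * exp (- 1))) / a^2)
     \<le> XI \<alpha> \<beta> s (b - 1) (dx (wA a c))"
  unfolding XI_def
proof (rule master_lower)
  show "1 \<le> a" using a by simp
  show "0 \<le> gA a^2 * (a^2 / 4) * (japanese a powr (2 * s) / 2 powr \<bar>2 * s\<bar>) * R powr (min 0 (2 * (b - 1))) * (exp (- 1) * exp (- 1))"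
    by simp
  fix \<xi> \<tau>
  assume box: "\<bar>\<xi> - a\<bar> \<le> 1 / a^2" "\<bar>\<tau> - c\<bar> \<le> 1"
  have "gA a^2 * (a^2 / 4) * (japanese a powr (2 * s) / 2 powr \<bar>2 * s\<bar>) * R powr (min 0 (2 * (b - 1))) * (exp (- 1) * exp (- 1))
    \<le> (japanese \<xi> powr s * japanese (\<tau> - phi \<alpha> \<beta> \<xi>) powr (b - 1) * (\<bar>\<xi>\<bar> * (gA a * (exp (- ((a^2 * (\<xi> - a))^2) / 2) * exp (- ((\<tau> - c)^2) / 2)))))^2"
    by (rule H2_lower[OF a box R[OF box]])
  also have "\<dots> = (japanese (fst (\<xi>, \<tau>)) powr s * japanese (snd (\<xi>, \<tau>) - phi \<alpha> \<beta> (fst (\<xi>, \<tau>))) powr (b - 1) * cmod (fourier2 (dx (wA a c)) (\<xi>, \<tau>)))^2"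
    using a by (simp add: fourier_dx_wA)
  finally show "gA a^2 * (a^2 / 4) * (japanese a powr (2 * s) / 2 powr \<bar>2 * s\<bar>) * R powr (min 0 (2 * (b - 1))) * (exp (- 1) * exp (- 1))
    \<le> (japanese (fst (\<xi>, \<tau>)) powr s * japanese (snd (\<xi>, \<tau>) - phi \<alpha> \<beta> (fst (\<xi>, \<tau>))) powr (b - 1) * cmod (fourier2 (dx (wA a c)) (\<xi>, \<tau>)))^2" .
qed

theorem proposition2p3:
  fixes \<alpha>1 \<alpha>2 s b \<beta>1 \<beta>2 :: real
  assumes "\<alpha>1 = \<alpha>2" and "\<alpha>1 \<noteq> 0"
  shows "\<not> (\<exists>C::real. \<forall>w \<in> schwartz.
            Xnorm \<alpha>2 \<beta>2 s (b - 1) (dx w) \<le> C * Xnorm \<alpha>1 \<beta>1 s b w)"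
proof
  assume "\<exists>C::real. \<forall>w \<in> schwartz. Xnorm \<alpha>2 \<beta>2 s (b - 1) (dx w) \<le> C * Xnorm \<alpha>1 \<beta>1 s b w"
  then obtain C where HC: "\<And>w. w \<in> schwartz \<Longrightarrow> Xnorm \<alpha>2 \<beta>2 s (b - 1) (dx w) \<le> C * Xnorm \<alpha>1 \<beta>1 s b w"
    by blast
  define \<alpha> where "\<alpha> = \<alpha>1"
  have \<alpha>2: "\<alpha>2 = \<alpha>" using assms(1) by (simp add: \<alpha>_def)
  define K where "K = 7 * \<bar>\<alpha>\<bar> + \<bar>\<beta>1\<bar> + \<bar>\<beta>2\<bar>"
  have K0: "K \<ge> 0" by (simp add: K_def)
  have K1a: "7 * \<bar>\<alpha>\<bar> + \<bar>\<beta>1\<bar> \<le> K" and K2a: "7 * \<bar>\<alpha>\<bar> + \<bar>\<beta>2\<bar> \<le> K" by (simp_all add: K_def)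
  obtain B where B0: "B > 0" and Bp: "\<forall>a c D h. a \<ge> 1 \<longrightarrow> D \<ge> 0 \<longrightarrow>
     (\<forall>\<xi> \<tau>. h (\<xi>, \<tau>) \<le> D * (japanese (a^2 * (\<xi> - a)) powr (2 * \<bar>s\<bar> + 6 * \<bar>b\<bar>) * japanese (\<tau> - c) powr (2 * \<bar>s\<bar> + 6 * \<bar>b\<bar>) *
         exp (- ((a^2 * (\<xi> - a))^2)) * exp (- ((\<tau> - c)^2)))) \<longrightarrow>
     (\<integral>\<^sup>+z. ennreal (h z) \<partial>lborel) \<le> ennreal (D * B / a^2)"
    using master_upper[of "2 * \<bar>s\<bar> + 6 * \<bar>b\<bar>"] by auto
  obtain B2 where B2p: "\<forall>a c D h. a \<ge> 1 \<longrightarrow> D \<ge> 0 \<longrightarrow>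
     (\<forall>\<xi> \<tau>. h (\<xi>, \<tau>) \<le> D * (japanese (a^2 * (\<xi> - a)) powr (\<bar>2 * s + 2\<bar> + 3 * \<bar>2 * (b - 1)\<bar>) * japanese (\<tau> - c) powr (\<bar>2 * s + 2\<bar> + 3 * \<bar>2 * (b - 1)\<bar>) *
         exp (- ((a^2 * (\<xi> - a))^2)) * exp (- ((\<tau> - c)^2)))) \<longrightarrow>
     (\<integral>\<^sup>+z. ennreal (h z) \<partial>lborel) \<le> ennreal (D * B2 / a^2)"
    using master_upper[of "\<bar>2 * s + 2\<bar> + 3 * \<bar>2 * (b - 1)\<bar>"] by auto
  define m where "m = min 0 (2 * (b - 1))"
  define K1 where "K1 = (1 + K) powr (2 * \<bar>b\<bar>)"
  have K1pos: "K1 > 0" using K0 by (simp add: K1_def)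
  define l0 where "l0 = (if b > 0 then (2 + 10 * K) powr m else (2 + 8 * K) powr m)"
  have l0pos: "l0 > 0" using K0 by (simp add: l0_def)
  define \<gamma> where "\<gamma> = (if b > 0 then 2 + m else 2)"
  have \<gamma>pos: "\<gamma> > 0" by (simp add: \<gamma>_def m_def min_def)
  define \<kappa> where "\<kappa> = exp (- 1) * exp (- 1) / 2 powr \<bar>2 * s\<bar>"
  have \<kappa>pos: "\<kappa> > 0" by (simp add: \<kappa>_def)
  define X where "X = C^2 * K1 * B / (l0 * \<kappa>)"
  have X0: "X \<ge> 0" using K1pos B0 l0pos \<kappa>pos by (simp add: X_def)
  define a where "a = max 2 ((X + 1) powr (1 / \<gamma>))"
  have a2: "a \<ge> 2" by (simp add: a_def)
  have a1: "a \<ge> 1" "a > 0" using a2 by simp_all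
  have aX: "X + 1 \<le> a powr \<gamma>"
  proof -
    have "X + 1 = ((X + 1) powr (1 / \<gamma>)) powr \<gamma>"
      using X0 \<gamma>pos by (simp add: powr_powr)
    also have "\<dots> \<le> a powr \<gamma>"
      using \<gamma>pos by (intro powr_mono2) (auto simp: a_def)
    finally show ?thesis .
  qed
  define c where "c = (if b > 0 then phi \<alpha> \<beta>1 a else phi \<alpha> \<beta>2 a)"
  define w where "w = wA a c"
  have ws: "w \<in> schwartz" unfolding w_def using a1 by (intro wA_schwartz) auto
  define R where "R = (if b > 0 then (2 + 10 * K) * a else 2 + 8 * K)"
  have Rb: "japanese (\<tau> - phi \<alpha> \<beta>2 \<xi>) \<le> R" if box: "\<bar>\<xi> - a\<bar> \<le> 1 / a^2" "\<bar>\<tau> - c\<bar> \<le> 1" for \<xi> \<tau>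
  proof (cases "b > 0")
    case True
    then show ?thesis using RA[OF a1(1) box(1), of \<tau> \<alpha> \<beta>1 K \<beta>2] box(2) by (simp add: R_def c_def K_def)
  next
    case False
    then show ?thesis using RB[OF a1(1) box(1), of \<tau> \<alpha> \<beta>2 K \<beta>1] box(2) by (simp add: R_def c_def K_def)
  qed
  have aR: "a^2 * R powr m = l0 * a powr \<gamma>"
  proof (cases "b > 0")
    case True
    have "R powr m = (2 + 10 * K) powr m * a powr m"
      using True K0 a1 by (simp add: R_def powr_mult)
    moreover have "a^2 = a powr 2" using a1 by (simp add: powr_numeral)
    ultimately show ?thesis using True by (simp add: l0_def \<gamma>_def powr_add mult_ac)
  next
    case False
    then show ?thesis using a1 by (simp add: l0_def \<gamma>_def R_def powr_numeral)
  qed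
  define G where "G = gA a^2 * japanese a powr (2 * s) / a^2"
  have Gpos: "G > 0" using a1 J_pos[of a] by (simp add: G_def gA_def)
  define E1 where "E1 = enn2real (XI \<alpha> \<beta>1 s b w)"
  define E2 where "E2 = enn2real (XI \<alpha> \<beta>2 s (b - 1) (dx w))"
  have E1le: "E1 \<le> G * K1 * B"
  proof -
    have "XI \<alpha> \<beta>1 s b w \<le> ennreal ((gA a^2 * japanese a powr (2 * s) * (1 + K) powr (2 * \<bar>b\<bar>)) * B / a^2)"
      unfolding w_def by (rule I1_bound[OF a1(1) K1a _ Bp]) (simp add: c_def)
    also have "\<dots> = ennreal (G * K1 * B)" by (simp add: G_def K1_def field_simps)
    finally have le: "XI \<alpha> \<beta>1 s b w \<le> ennreal (G * K1 * B)" .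
    have "enn2real (XI \<alpha> \<beta>1 s b w) \<le> enn2real (ennreal (G * K1 * B))"
      by (rule enn2real_mono[OF le]) simp
    then show ?thesis using Gpos K1pos B0 by (simp add: E1_def)
  qed
  have E2ge: "G * (\<kappa> * l0 * a powr \<gamma>) \<le> E2"
  proof -
    have lo: "ennreal (4 * (gA a^2 * (a^2 / 4) * (japanese a powr (2 * s) / 2 powr \<bar>2 * s\<bar>) * R powr (min 0 (2 * (b - 1))) * (exp (- 1) * exp (- 1))) / a^2)
       \<le> XI \<alpha> \<beta>2 s (b - 1) (dx w)"
      unfolding w_def by (rule I2_lower[OF a2 Rb])
    have fin: "XI \<alpha> \<beta>2 s (b - 1) (dx w) < \<infinity>"
      unfolding w_def by (rule I2_finite[OF a1(1) K2a B2p])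
    have eq: "4 * (gA a^2 * (a^2 / 4) * (japanese a powr (2 * s) / 2 powr \<bar>2 * s\<bar>) * R powr (min 0 (2 * (b - 1))) * (exp (- 1) * exp (- 1))) / a^2
        = G * (\<kappa> * (a^2 * R powr m))"
      using a1 by (simp add: G_def \<kappa>_def m_def field_simps)
    have nn: "0 \<le> G * (\<kappa> * (a^2 * R powr m))" using Gpos \<kappa>pos by simp
    have "enn2real (ennreal (G * (\<kappa> * (a^2 * R powr m)))) \<le> enn2real (XI \<alpha> \<beta>2 s (b - 1) (dx w))"
      using lo fin unfolding eq by (intro enn2real_mono) auto
    then have "G * (\<kappa> * (a^2 * R powr m)) \<le> E2" using nn by (simp add: E2_def)
    then show ?thesis unfolding aR by (simp add: mult_ac)
  qed
  have "G * (\<kappa> * l0 * (X + 1)) \<le> G * (\<kappa> * l0 * a powr \<gamma>)"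
    using aX Gpos \<kappa>pos l0pos by (intro mult_left_mono) auto
  also have "G * (\<kappa> * l0 * (X + 1)) = G * (C^2 * K1 * B) + G * \<kappa> * l0"
    using \<kappa>pos l0pos by (simp add: X_def field_simps)
  finally have main: "G * (C^2 * K1 * B) + G * \<kappa> * l0 \<le> E2" using E2ge by linarith
  have GKl: "G * \<kappa> * l0 > 0" using Gpos \<kappa>pos l0pos by simp
  have E2pos: "E2 > 0"
  proof -
    have "0 \<le> G * (C^2 * K1 * B)" using Gpos K1pos B0 by simp
    then show ?thesis using main GKl by linarith
  qed
  have E1nn: "E1 \<ge> 0" by (simp add: E1_def)
  have CE: "C^2 * E1 < E2"
  proof -
    have "C^2 * E1 \<le> C^2 * (G * K1 * B)" using E1le by (intro mult_left_mono) auto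
    also have "\<dots> = G * (C^2 * K1 * B)" by (simp add: mult_ac)
    finally show ?thesis using main GKl by linarith
  qed
  have "C * sqrt E1 < sqrt E2"
  proof (cases "C > 0")
    case True
    have "C * sqrt E1 = sqrt (C^2 * E1)" using True by (simp add: real_sqrt_mult)
    also have "\<dots> < sqrt E2" using CE by simp
    finally show ?thesis .
  next
    case False
    then have "C * sqrt E1 \<le> 0" using E1nn by (simp add: mult_nonpos_nonneg)
    also have "0 < sqrt E2" using E2pos by simp
    finally show ?thesis .
  qed
  moreover have "sqrt E2 \<le> C * sqrt E1"
    using HC[OF ws] unfolding Xnorm_XI E1_def E2_def \<alpha>2 \<alpha>_def by simp
  ultimately show False by linarith
qed

end
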